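(* Let $f:\mathbb{R}^n_{>0}\to\mathbb{R}^n_{>0}$ be in the class $\mathcal{M}_+$. Then $f$ has an eigenvector in $\mathbb{R}^n_{>0}$ if and only if $f$ is strongly nonnegative. If $f$ does have an eigenvector in $\mathbb{R}^n_{>0}$, then it is unique up to scaling if and only if $\mathcal{G}(f)$ has a unique final class.
   Context: For $r\in\mathbb{R}$ and a probability vector $\sigma\in\mathbb{R}^n_{\ge0}$ ($\sum_i\sigma_i=1$), the $(r,\sigma)$-mean of $x\in\mathbb{R}^n_{\ge0}$ is $M_{r\sigma}(x)=(\sum_i\sigma_ix_i^r)^{1/r}$ if $r\ne0$, and $M_{0\sigma}(x)=\prod_{i:\sigma_i>0}x_i^{\sigma_i}$. Class $M_+$: maps $f:\mathbb{R}^n_{\ge0}\to\mathbb{R}^n_{>0}$ each of whose entries is a positive linear combination of $(r,\sigma)$-means with $r\ge0$. Class $\mathcal{M}_+$: the smallest class of maps $\mathbb{R}^n_{\ge0}\to\mathbb{R}^n_{\ge0}$ containing $M_+$ and closed under addition and composition; $f$ in the claim is (the restriction to $\mathbb{R}^n_{>0}$ of) such a map. Such $f$ are order-preserving and homogeneous. $P^J_0(x)_j=x_j$ for $j\in J$, $0$ otherwise; $f^J_0=P^J_0fP^J_0$; $r(g)=\inf_{x\in\mathbb{R}^n_{>0}}\max_ig(x)_i/x_i$. $\mathcal{G}(f)$ is the directed graph on $[n]$ with an arc $i\to j$ when $\lim_{t\to\infty}f(\exp(te_{\{j\}}))_i=\infty$. A final class is a strongly connected component with no arcs leaving it. $f$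 is strongly nonnegative if $r(f^C_0)=r(f)$ for every final class $C$ and $r(f^C_0)<r(f)$ for every non-final strongly connected component $C$. An eigenvector of $f$ in $\mathbb{R}^n_{>0}$ is $x\in\mathbb{R}^n_{>0}$ with $f(x)=\mu x$. *)

theory Defs
  imports "HOL-Analysis.Analysis"
begin

definition prob_vec :: "real^'n \<Rightarrow> bool" where
  "prob_vec \<sigma> \<longleftrightarrow> (\<forall>i. \<sigma> $ i \<ge> 0) \<and> (\<Sum>i\<in>UNIV. \<sigma> $ i) = 1"

definition rmean :: "real \<Rightarrow> real^'n \<Rightarrow> real^'n \<Rightarrow> real" where
  "rmean r \<sigma> x =
     (if r \<noteq> 0 then (\<Sum>i\<in>UNIV. \<sigma> $ i * x $ i powr r) powr (1 / r)
      else (\<Prod>i\<in>{i. \<sigma> $ i > 0}. x $ i powr \<sigma> $ i))"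

definition nonneg_vec :: "real^'n \<Rightarrow> bool" where
  "nonneg_vec x \<longleftrightarrow> (\<forall>i. x $ i \<ge> 0)"

definition pos_vec :: "real^'n \<Rightarrow> bool" where
  "pos_vec x \<longleftrightarrow> (\<forall>i. x $ i > 0)"

definition Mplus :: "(real^'n \<Rightarrow> real^'n) set" where
  "Mplus = {f. \<forall>i. \<exists>(K::nat) c r \<sigma>. K > 0 \<and>
       (\<forall>k<K. c k > 0 \<and> r k \<ge> 0 \<and> prob_vec (\<sigma> k)) \<and>
       (\<forall>x. nonneg_vec x \<longrightarrow> f x $ i = (\<Sum>k<K. c k * rmean (r k) (\<sigma> k) x))}"

text \<open>Class \<M>_+: smallest class containing M_+ closed under addition and composition.\<close>
inductive_set Mplus_cl :: "(real^'n \<Rightarrow> real^'n) set" where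
  base: "f \<in> Mplus \<Longrightarrow> f \<in> Mplus_cl"
| add: "f \<in> Mplus_cl \<Longrightarrow> g \<in> Mplus_cl \<Longrightarrow> (\<lambda>x. f x + g x) \<in> Mplus_cl"
| comp: "f \<in> Mplus_cl \<Longrightarrow> g \<in> Mplus_cl \<Longrightarrow> f \<circ> g \<in> Mplus_cl"

definition proj0 :: "'n set \<Rightarrow> real^'n \<Rightarrow> real^'n" where
  "proj0 J x = (\<chi> j. if j \<in> J then x $ j else 0)"

definition restr0 :: "(real^'n \<Rightarrow> real^'n) \<Rightarrow> 'n set \<Rightarrow> real^'n \<Rightarrow> real^'n" where
  "restr0 f J = proj0 J \<circ> f \<circ> proj0 J"

definition cone_r :: "(real^'n \<Rightarrow> real^'n) \<Rightarrow> real" where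
  "cone_r g = Inf ((\<lambda>x. Max (range (\<lambda>i. g x $ i / x $ i))) ` {x. pos_vec x})"

definition exp_unit :: "real \<Rightarrow> 'n \<Rightarrow> real^'n" where
  "exp_unit t j = (\<chi> k. if k = j then exp t else 1)"

definition arc :: "(real^'n \<Rightarrow> real^'n) \<Rightarrow> 'n \<Rightarrow> 'n \<Rightarrow> bool" where
  "arc f i j \<longleftrightarrow> filterlim (\<lambda>t. f (exp_unit t j) $ i) at_top at_top"

definition reach :: "(real^'n \<Rightarrow> real^'n) \<Rightarrow> 'n \<Rightarrow> 'n \<Rightarrow> bool" where
  "reach f i j \<longleftrightarrow> (i, j) \<in> {(a, b). arc f a b}\<^sup>*"

definition scc :: "(real^'n \<Rightarrow> real^'n) \<Rightarrow> 'n set \<Rightarrow> bool" where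
  "scc f C \<longleftrightarrow> (\<exists>i. C = {j. reach f i j \<and> reach f j i})"

definition final_class :: "(real^'n \<Rightarrow> real^'n) \<Rightarrow> 'n set \<Rightarrow> bool" where
  "final_class f C \<longleftrightarrow> scc f C \<and> (\<forall>i j. i \<in> C \<and> arc f i j \<longrightarrow> j \<in> C)"

definition strongly_nonneg :: "(real^'n \<Rightarrow> real^'n) \<Rightarrow> bool" where
  "strongly_nonneg f \<longleftrightarrow>
     (\<forall>C. final_class f C \<longrightarrow> cone_r (restr0 f C) = cone_r f) \<and>
     (\<forall>C. scc f C \<and> \<not> final_class f C \<longrightarrow> cone_r (restr0 f C) < cone_r f)"

definition pos_eigvec :: "(real^'n \<Rightarrow> real^'n) \<Rightarrow> real^'n \<Rightarrow> bool" where
  "pos_eigvec f x \<longleftrightarrow> pos_vec x \<and> (\<exists>\<mu>. f x = \<mu> *\<^sub>R x)"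

end

theory Submission
  imports Defs
begin

definition vone :: "real^'n" where "vone = (\<chi> i. 1)"

definition sgood :: "(real^'n \<Rightarrow> real) \<Rightarrow> 'n set \<Rightarrow> bool" where
"sgood g S \<longleftrightarrow>
 (\<forall>x. nonneg_vec x \<longrightarrow> g x \<ge> 0) \<and>
 (\<forall>x y. nonneg_vec x \<and> (\<forall>i. x$i \<le> y$i) \<longrightarrow> g x \<le> g y) \<and>
 (\<forall>x t. nonneg_vec x \<and> t > 0 \<longrightarrow> g (t *\<^sub>R x) = t * g x) \<and>
 continuous_on {x. nonneg_vec x} g \<and>
 (\<forall>x y. nonneg_vec x \<and> nonneg_vec y \<and> (\<forall>j\<in>S. x$j = y$j) \<longrightarrow> g x = g y) \<and>
 (\<forall>j a b. j \<in> S \<and> nonneg_vec a \<and> pos_vec b \<and> (\<forall>k. a$k \<le> b$k) \<and> a$j < b$j \<longrightarrow> g a < g b) \<and>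
 g vone > 0 \<and>
 (\<forall>j\<in>S. \<exists>\<kappa> \<theta>. \<kappa> > 0 \<and> 0 < \<theta> \<and> \<theta> \<le> 1 \<and>
     (\<forall>x m. nonneg_vec x \<and> m > 0 \<and> (\<forall>k\<in>S. m \<le> x$k) \<longrightarrow> \<kappa> * m * (x$j / m) powr \<theta> \<le> g x))"

lemma nonneg_scale: "nonneg_vec x \<Longrightarrow> t \<ge> 0 \<Longrightarrow> nonneg_vec (t *\<^sub>R x)"
  by (simp add: nonneg_vec_def)

lemma sgood_cong:
  fixes g h :: "real^'n \<Rightarrow> real"
  assumes "sgood g S" "\<And>x. nonneg_vec x \<Longrightarrow> h x = g x"
  shows "sgood h S"
proof -
  have nv: "nonneg_vec (vone::real^'n)" by (simp add: nonneg_vec_def vone_def)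
  have mono: "nonneg_vec x \<Longrightarrow> (\<forall>i. x$i \<le> y$i) \<Longrightarrow> nonneg_vec y" for x y :: "real^'n"
    unfolding nonneg_vec_def by (meson order_trans)
  have pos: "pos_vec b \<Longrightarrow> nonneg_vec b" for b :: "real^'n"
    unfolding nonneg_vec_def pos_vec_def by (simp add: less_imp_le)
  from assms(1) have
    B1: "\<forall>x. nonneg_vec x \<longrightarrow> g x \<ge> 0" and
    B2: "\<forall>x y. nonneg_vec x \<and> (\<forall>i. x$i \<le> y$i) \<longrightarrow> g x \<le> g y" and
    B3: "\<forall>x t. nonneg_vec x \<and> t > 0 \<longrightarrow> g (t *\<^sub>R x) = t * g x" and
    B4: "continuous_on {x. nonneg_vec x} g" and
    B5: "\<forall>x y. nonneg_vec x \<and> nonneg_vec y \<and> (\<forall>j\<in>S. x$j = y$j) \<longrightarrow> g x = g y" and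
    B6: "\<forall>j a b. j \<in> S \<and> nonneg_vec a \<and> pos_vec b \<and> (\<forall>k. a$k \<le> b$k) \<and> a$j < b$j \<longrightarrow> g a < g b" and
    B7: "g vone > 0" and
    B8: "\<forall>j\<in>S. \<exists>\<kappa> \<theta>. \<kappa> > 0 \<and> 0 < \<theta> \<and> \<theta> \<le> 1 \<and>
     (\<forall>x m. nonneg_vec x \<and> m > 0 \<and> (\<forall>k\<in>S. m \<le> x$k) \<longrightarrow> \<kappa> * m * (x$j / m) powr \<theta> \<le> g x)"
    unfolding sgood_def by blast+
  have C1: "\<forall>x. nonneg_vec x \<longrightarrow> h x \<ge> 0" using B1 assms(2) by simp
  have C2: "\<forall>x y. nonneg_vec x \<and> (\<forall>i. x$i \<le> y$i) \<longrightarrow> h x \<le> h y"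
  proof (intro allI impI)
    fix x y :: "real^'n" assume a: "nonneg_vec x \<and> (\<forall>i. x$i \<le> y$i)"
    then have "nonneg_vec y" using mono by blast
    then show "h x \<le> h y" using a B2 assms(2) by simp
  qed
  have C3: "\<forall>x t. nonneg_vec x \<and> t > 0 \<longrightarrow> h (t *\<^sub>R x) = t * h x"
  proof (intro allI impI)
    fix x :: "real^'n" and t :: real assume a: "nonneg_vec x \<and> t > 0"
    then have "nonneg_vec (t *\<^sub>R x)" using nonneg_scale[of x t] by simp
    then show "h (t *\<^sub>R x) = t * h x" using a B3 assms(2) by simp
  qed
  have C4: "continuous_on {x. nonneg_vec x} h"
    using B4 assms(2) by (metis (mono_tags, lifting) continuous_on_cong mem_Collect_eq)
  have C5: "\<forall>x y. nonneg_vec x \<and> nonneg_vec y \<and> (\<forall>j\<in>S. x$j = y$j) \<longrightarrow> h x = h y"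
    using B5 assms(2) by simp
  have C6: "\<forall>j a b. j \<in> S \<and> nonneg_vec a \<and> pos_vec b \<and> (\<forall>k. a$k \<le> b$k) \<and> a$j < b$j \<longrightarrow> h a < h b"
    using B6 assms(2) pos by simp
  have C7: "h vone > 0" using B7 assms(2) nv by simp
  have C8: "\<forall>j\<in>S. \<exists>\<kappa> \<theta>. \<kappa> > 0 \<and> 0 < \<theta> \<and> \<theta> \<le> 1 \<and>
     (\<forall>x m. nonneg_vec x \<and> m > 0 \<and> (\<forall>k\<in>S. m \<le> x$k) \<longrightarrow> \<kappa> * m * (x$j / m) powr \<theta> \<le> h x)"
    using B8 assms(2) by simp
  show ?thesis unfolding sgood_def using C1 C2 C3 C4 C5 C6 C7 C8 by blast
qed

section \<open>Means\<close>

lemma prob_le1: "prob_vec \<sigma> \<Longrightarrow> \<sigma>$j \<le> 1"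
  unfolding prob_vec_def
  using member_le_sum[of j UNIV "\<lambda>i. \<sigma>$i"] by auto

lemma prob_sum_supp: "prob_vec \<sigma> \<Longrightarrow> (\<Sum>i\<in>{i. \<sigma>$i > 0}. \<sigma>$i) = 1"
proof -
  assume p: "prob_vec \<sigma>"
  have "(\<Sum>i\<in>{i. \<sigma>$i > 0}. \<sigma>$i) = (\<Sum>i\<in>UNIV. \<sigma>$i)"
    apply (rule sum.mono_neutral_left)
    using p unfolding prob_vec_def by (auto simp: order.order_iff_strict)
  then show ?thesis using p unfolding prob_vec_def by simp
qed

lemma sgood_rmean_pos:
  fixes \<sigma> :: "real^'n"
  assumes r: "r > 0" and p: "prob_vec \<sigma>"
  shows "sgood (rmean r \<sigma>) {j. \<sigma>$j > 0}"
proof -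
  let ?P = "\<lambda>x::real^'n. \<Sum>i\<in>UNIV. \<sigma> $ i * x $ i powr r"
  have rm: "rmean r \<sigma> x = ?P x powr (1/r)" for x using r by (simp add: rmean_def)
  have sig0: "\<sigma>$i \<ge> 0" for i using p by (simp add: prob_vec_def)
  have P0: "?P x \<ge> 0" for x by (intro sum_nonneg mult_nonneg_nonneg sig0 powr_ge_zero)
  have Pmono: "?P x \<le> ?P y" if "nonneg_vec x" "\<forall>i. x$i \<le> y$i" for x y
    using that r sig0 by (intro sum_mono mult_left_mono powr_mono2) (auto simp: nonneg_vec_def)
  have A1: "\<forall>x. nonneg_vec x \<longrightarrow> rmean r \<sigma> x \<ge> 0" by (simp add: rm)
  have A2: "\<forall>x y. nonneg_vec x \<and> (\<forall>i. x$i \<le> y$i) \<longrightarrow> rmean r \<sigma> x \<le> rmean r \<sigma> y"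
    using Pmono P0 r by (auto simp: rm intro!: powr_mono2)
  have A3: "rmean r \<sigma> (t *\<^sub>R x) = t * rmean r \<sigma> x" if "nonneg_vec x" "t > 0" for x t
  proof -
    have "?P (t *\<^sub>R x) = t powr r * ?P x"
      by (simp add: powr_mult sum_distrib_left algebra_simps)
    then have "rmean r \<sigma> (t *\<^sub>R x) = (t powr r) powr (1/r) * ?P x powr (1/r)"
      by (simp add: rm powr_mult)
    also have "(t powr r) powr (1/r) = t" using r that by (simp add: powr_powr)
    finally show ?thesis by (simp add: rm)
  qed
  have A4: "continuous_on {x. nonneg_vec x} (rmean r \<sigma>)"
  proof -
    have "continuous_on {x. nonneg_vec x} (\<lambda>x::real^'n. x $ i powr r)" for i
      apply (rule continuous_on_powr')
      using r by (auto intro!: continuous_on_component continuous_on_id simp: nonneg_vec_def)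
    then have "continuous_on {x. nonneg_vec x} ?P"
      by (intro continuous_on_sum continuous_on_mult continuous_on_const) auto
    then have "continuous_on {x. nonneg_vec x} (\<lambda>x. ?P x powr (1/r))"
      apply (rule continuous_on_powr')
      using r P0 by auto
    then show ?thesis by (simp add: rm[abs_def])
  qed
  have A5: "rmean r \<sigma> x = rmean r \<sigma> y" if "\<forall>j\<in>{j. \<sigma>$j > 0}. x$j = y$j" for x y
  proof -
    have "?P x = ?P y"
    proof (rule sum.cong)
      fix i show "\<sigma> $ i * x $ i powr r = \<sigma> $ i * y $ i powr r"
        using that sig0[of i] by (cases "\<sigma>$i > 0") auto
    qed simp
    then show ?thesis by (simp add: rm)
  qed
  have A6: "rmean r \<sigma> a < rmean r \<sigma> b" if "\<sigma>$j > 0" "nonneg_vec a" "pos_vec b" "\<forall>k. a$k \<le> b$k" "a$j < b$j" for j a b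
  proof -
    have "?P a < ?P b"
    proof (rule sum_strict_mono_ex1)
      show "\<forall>x\<in>UNIV. \<sigma> $ x * a $ x powr r \<le> \<sigma> $ x * b $ x powr r"
        using that r sig0 by (auto intro!: mult_left_mono powr_mono2 simp: nonneg_vec_def)
      show "\<exists>x\<in>UNIV. \<sigma> $ x * a $ x powr r < \<sigma> $ x * b $ x powr r"
        using that r sig0 by (intro bexI[of _ j] mult_strict_left_mono powr_less_mono2) (auto simp: nonneg_vec_def)
    qed simp
    then show ?thesis using P0 r by (simp add: rm powr_less_mono2)
  qed
  have A7: "rmean r \<sigma> vone = 1"
    using p by (simp add: rm vone_def prob_vec_def)
  have A8: "\<exists>\<kappa> \<theta>. \<kappa> > 0 \<and> 0 < \<theta> \<and> \<theta> \<le> 1 \<and>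
     (\<forall>x m. nonneg_vec x \<and> m > 0 \<and> (\<forall>k\<in>{j. \<sigma>$j > 0}. m \<le> x$k) \<longrightarrow> \<kappa> * m * (x$j / m) powr \<theta> \<le> rmean r \<sigma> x)"
    if j: "\<sigma>$j > 0" for j
  proof (intro exI conjI allI impI)
    show "\<sigma>$j powr (1/r) > 0" using j by simp
    show "(0::real) < 1" "(1::real) \<le> 1" by auto
    fix x m assume h: "nonneg_vec x \<and> m > 0 \<and> (\<forall>k\<in>{j. \<sigma>$j > 0}. m \<le> x$k)"
    then have xj: "x$j \<ge> m" "m > 0" using j by auto
    have "\<sigma>$j * x$j powr r \<le> ?P x"
      using member_le_sum[of j UNIV "\<lambda>i. \<sigma> $ i * x $ i powr r"] sig0
      by (simp add: mult_nonneg_nonneg)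
    then have "(\<sigma>$j * x$j powr r) powr (1/r) \<le> rmean r \<sigma> x"
      using r j by (simp add: rm powr_mono2)
    moreover have "(\<sigma>$j * x$j powr r) powr (1/r) = \<sigma>$j powr (1/r) * x$j"
      using r xj j by (simp add: powr_mult powr_powr)
    moreover have "\<sigma>$j powr (1/r) * m * (x$j / m) powr 1 = \<sigma>$j powr (1/r) * x$j"
      using xj by simp
    ultimately show "\<sigma>$j powr (1/r) * m * (x$j / m) powr 1 \<le> rmean r \<sigma> x" by simp
  qed
  show ?thesis unfolding sgood_def
    using A1 A2 A3 A4 A5 A6 A7 A8 by auto
qed

lemma sgood_rmean_zero:
  fixes \<sigma> :: "real^'n"
  assumes p: "prob_vec \<sigma>"
  shows "sgood (rmean 0 \<sigma>) {j. \<sigma>$j > 0}"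
proof -
  let ?S = "{j. \<sigma>$j > 0}"
  let ?G = "\<lambda>x::real^'n. \<Prod>i\<in>?S. x $ i powr \<sigma>$i"
  have rm: "rmean 0 \<sigma> x = ?G x" for x by (simp add: rmean_def)
  have sig0: "\<sigma>$i \<ge> 0" for i using p by (simp add: prob_vec_def)
  have ssum: "(\<Sum>i\<in>?S. \<sigma>$i) = 1" using prob_sum_supp[OF p] .
  have A1: "\<forall>x. nonneg_vec x \<longrightarrow> rmean 0 \<sigma> x \<ge> 0" by (simp add: rm prod_nonneg)
  have A2: "\<forall>x y. nonneg_vec x \<and> (\<forall>i. x$i \<le> y$i) \<longrightarrow> rmean 0 \<sigma> x \<le> rmean 0 \<sigma> y"
    by (auto simp: rm nonneg_vec_def intro!: prod_mono powr_mono2)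
  have A3: "rmean 0 \<sigma> (t *\<^sub>R x) = t * rmean 0 \<sigma> x" if "nonneg_vec x" "t > 0" for x t
  proof -
    have "?G (t *\<^sub>R x) = (\<Prod>i\<in>?S. t powr \<sigma>$i) * ?G x"
      by (simp add: powr_mult prod.distrib)
    also have "(\<Prod>i\<in>?S. t powr \<sigma>$i) = t powr (\<Sum>i\<in>?S. \<sigma>$i)"
      using that by (simp add: powr_sum)
    also have "\<dots> = t" using ssum that by simp
    finally show ?thesis by (simp add: rm)
  qed
  have A4: "continuous_on {x. nonneg_vec x} (rmean 0 \<sigma>)"
  proof -
    have "continuous_on {x. nonneg_vec x} (\<lambda>x::real^'n. x $ i powr \<sigma>$i)" if "i \<in> ?S" for i
      apply (rule continuous_on_powr')
      using that by (auto intro!: continuous_on_component continuous_on_id simp: nonneg_vec_def)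
    then have "continuous_on {x. nonneg_vec x} ?G"
      by (intro continuous_on_prod) auto
    then show ?thesis by (simp add: rm[abs_def])
  qed
  have A5: "rmean 0 \<sigma> x = rmean 0 \<sigma> y" if "\<forall>j\<in>?S. x$j = y$j" for x y
    using that by (simp add: rm)
  have A6: "rmean 0 \<sigma> a < rmean 0 \<sigma> b" if "\<sigma>$j > 0" "nonneg_vec a" "pos_vec b" "\<forall>k. a$k \<le> b$k" "a$j < b$j" for j a b
    unfolding rm
    apply (rule prod_mono_strict[of j])
    using that apply (auto intro!: powr_mono2 powr_less_mono2 simp: nonneg_vec_def pos_vec_def)
    by (metis less_irrefl)
  have A7: "rmean 0 \<sigma> vone = 1"
    by (simp add: rm vone_def)
  have A8: "\<exists>\<kappa> \<theta>. \<kappa> > 0 \<and> 0 < \<theta> \<and> \<theta> \<le> 1 \<and>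
     (\<forall>x m. nonneg_vec x \<and> m > 0 \<and> (\<forall>k\<in>?S. m \<le> x$k) \<longrightarrow> \<kappa> * m * (x$j / m) powr \<theta> \<le> rmean 0 \<sigma> x)"
    if j: "\<sigma>$j > 0" for j
  proof (intro exI conjI allI impI)
    show "(1::real) > 0" by simp
    show "0 < \<sigma>$j" "\<sigma>$j \<le> 1" using j prob_le1[OF p] by auto
    fix x m assume h: "nonneg_vec x \<and> m > 0 \<and> (\<forall>k\<in>?S. m \<le> x$k)"
    then have xj: "x$j \<ge> m" "m > 0" using j by auto
    let ?h = "\<lambda>i. if i = j then x$j powr \<sigma>$j else m powr \<sigma>$i"
    have "prod ?h ?S \<le> ?G x"
      apply (rule prod_mono)
      using h by (auto intro!: powr_mono2)
    moreover have "prod ?h ?S = x$j powr \<sigma>$j * (\<Prod>i\<in>?S-{j}. m powr \<sigma>$i)"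
      using j by (subst prod.remove[of _ j]) auto
    moreover have "(\<Prod>i\<in>?S-{j}. m powr \<sigma>$i) = m powr (\<Sum>i\<in>?S-{j}. \<sigma>$i)"
      using xj by (simp add: powr_sum)
    moreover have "(\<Sum>i\<in>?S-{j}. \<sigma>$i) = 1 - \<sigma>$j"
      using ssum j by (subst sum_diff1) auto
    moreover have "1 * m * (x$j / m) powr \<sigma>$j = x$j powr \<sigma>$j * m powr (1 - \<sigma>$j)"
      using xj by (simp add: powr_divide powr_diff)
    ultimately show "1 * m * (x$j / m) powr \<sigma>$j \<le> rmean 0 \<sigma> x" by (simp add: rm)
  qed
  show ?thesis unfolding sgood_def
    using A1 A2 A3 A4 A5 A6 A7 A8 by auto
qed

lemma sgood_rmean:
  assumes "r \<ge> 0" "prob_vec \<sigma>"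
  shows "sgood (rmean r \<sigma>) {j. \<sigma>$j > 0}"
  using assms sgood_rmean_pos sgood_rmean_zero by (cases "r = 0") auto

lemma sgoodI:
  fixes g :: "real^'n \<Rightarrow> real"
  assumes "\<And>x. nonneg_vec x \<Longrightarrow> g x \<ge> 0"
    "\<And>x y. nonneg_vec x \<Longrightarrow> (\<forall>i. x$i \<le> y$i) \<Longrightarrow> g x \<le> g y"
    "\<And>x t. nonneg_vec x \<Longrightarrow> t > 0 \<Longrightarrow> g (t *\<^sub>R x) = t * g x"
    "continuous_on {x. nonneg_vec x} g"
    "\<And>x y. nonneg_vec x \<Longrightarrow> nonneg_vec y \<Longrightarrow> (\<forall>j\<in>S. x$j = y$j) \<Longrightarrow> g x = g y"
    "\<And>j a b. j \<in> S \<Longrightarrow> nonneg_vec a \<Longrightarrow> pos_vec b \<Longrightarrow> (\<forall>k. a$k \<le> b$k) \<Longrightarrow> a$j < b$j \<Longrightarrow> g a < g b"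
    "g vone > 0"
    "\<And>j. j\<in>S \<Longrightarrow> \<exists>\<kappa> \<theta>. \<kappa> > 0 \<and> 0 < \<theta> \<and> \<theta> \<le> 1 \<and>
     (\<forall>x m. nonneg_vec x \<and> m > 0 \<and> (\<forall>k\<in>S. m \<le> x$k) \<longrightarrow> \<kappa> * m * (x$j / m) powr \<theta> \<le> g x)"
  shows "sgood g S"
  unfolding sgood_def using assms by blast

lemma sgood_nonneg: "sgood g S \<Longrightarrow> nonneg_vec x \<Longrightarrow> g x \<ge> 0"
  unfolding sgood_def by blast
lemma sgood_mono: "sgood g S \<Longrightarrow> nonneg_vec x \<Longrightarrow> (\<forall>i. x$i \<le> y$i) \<Longrightarrow> g x \<le> g y"
  unfolding sgood_def by blast
lemma sgood_homog: "sgood g S \<Longrightarrow> nonneg_vec x \<Longrightarrow> t > 0 \<Longrightarrow> g (t *\<^sub>R x) = t * g x"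
  unfolding sgood_def by blast
lemma sgood_cont: "sgood g S \<Longrightarrow> continuous_on {x. nonneg_vec x} g"
  unfolding sgood_def by blast
lemma sgood_indep: "sgood g S \<Longrightarrow> nonneg_vec x \<Longrightarrow> nonneg_vec y \<Longrightarrow> (\<forall>j\<in>S. x$j = y$j) \<Longrightarrow> g x = g y"
  unfolding sgood_def by blast
lemma sgood_strict: "sgood g S \<Longrightarrow> j \<in> S \<Longrightarrow> nonneg_vec a \<Longrightarrow> pos_vec b \<Longrightarrow> (\<forall>k. a$k \<le> b$k) \<Longrightarrow> a$j < b$j \<Longrightarrow> g a < g b"
  unfolding sgood_def by blast
lemma sgood_one: "sgood g S \<Longrightarrow> g vone > 0"
  unfolding sgood_def by blast
lemma sgood_growth: "sgood g S \<Longrightarrow> j\<in>S \<Longrightarrow> \<exists>\<kappa> \<theta>. \<kappa> > 0 \<and> 0 < \<theta> \<and> \<theta> \<le> 1 \<and>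
     (\<forall>x m. nonneg_vec x \<and> m > 0 \<and> (\<forall>k\<in>S. m \<le> x$k) \<longrightarrow> \<kappa> * m * (x$j / m) powr \<theta> \<le> g x)"
  unfolding sgood_def by blast

lemma pos_nonneg: "pos_vec b \<Longrightarrow> nonneg_vec b"
  unfolding nonneg_vec_def pos_vec_def by (simp add: less_imp_le)

lemma sgood_add:
  fixes g h :: "real^'n \<Rightarrow> real"
  assumes g: "sgood g S" and h: "sgood h T"
  shows "sgood (\<lambda>x. g x + h x) (S \<union> T)"
proof (rule sgoodI)
  fix x :: "real^'n" assume "nonneg_vec x" then show "0 \<le> g x + h x"
    using g h sgood_nonneg by (metis add_nonneg_nonneg)
next
  fix x y :: "real^'n" assume "nonneg_vec x" "\<forall>i. x$i \<le> y$i"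
  then show "g x + h x \<le> g y + h y" using g h sgood_mono by (metis add_mono)
next
  fix x :: "real^'n" and t :: real assume "nonneg_vec x" "t > 0"
  then show "g (t *\<^sub>R x) + h (t *\<^sub>R x) = t * (g x + h x)"
    using sgood_homog[OF g] sgood_homog[OF h] by (simp add: distrib_left)
next
  show "continuous_on {x. nonneg_vec x} (\<lambda>x. g x + h x)"
    using g h sgood_cont by (intro continuous_on_add) auto
next
  fix x y :: "real^'n" assume "nonneg_vec x" "nonneg_vec y" "\<forall>j\<in>S \<union> T. x$j = y$j"
  then show "g x + h x = g y + h y"
    using sgood_indep[OF g, of x y] sgood_indep[OF h, of x y] by auto
next
  fix j a b assume a: "j \<in> S \<union> T" "nonneg_vec a" "pos_vec b" "\<forall>k. a$k \<le> b$k" "a$j < b$j"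
  show "g a + h a < g b + h b"
  proof (cases "j \<in> S")
    case True
    then have "g a < g b" using sgood_strict[OF g] a by blast
    moreover have "h a \<le> h b" using sgood_mono[OF h] a by blast
    ultimately show ?thesis by simp
  next
    case False
    then have "h a < h b" using sgood_strict[OF h] a by blast
    moreover have "g a \<le> g b" using sgood_mono[OF g] a by blast
    ultimately show ?thesis by simp
  qed
next
  show "g vone + h vone > 0" using sgood_one[OF g] sgood_one[OF h] by simp
next
  fix j assume j: "j \<in> S \<union> T"
  show "\<exists>\<kappa> \<theta>. \<kappa> > 0 \<and> 0 < \<theta> \<and> \<theta> \<le> 1 \<and>
     (\<forall>x m. nonneg_vec x \<and> m > 0 \<and> (\<forall>k\<in>S \<union> T. m \<le> x$k) \<longrightarrow> \<kappa> * m * (x$j / m) powr \<theta> \<le> g x + h x)"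
  proof (cases "j \<in> S")
    case True
    then obtain \<kappa> \<theta> where k: "\<kappa> > 0" "0 < \<theta>" "\<theta> \<le> 1"
      "\<forall>x m. nonneg_vec x \<and> m > 0 \<and> (\<forall>k\<in>S. m \<le> x$k) \<longrightarrow> \<kappa> * m * (x$j / m) powr \<theta> \<le> g x"
      using sgood_growth[OF g] by blast
    show ?thesis
    proof (intro exI conjI allI impI)
      fix x m assume "nonneg_vec x \<and> m > 0 \<and> (\<forall>k\<in>S \<union> T. m \<le> x$k)"
      then show "\<kappa> * m * (x$j / m) powr \<theta> \<le> g x + h x"
        using k(4) sgood_nonneg[OF h, of x] by (smt (verit) UnCI)
    qed (use k in auto)
  next
    case False
    then have jT: "j \<in> T" using j by auto
    then obtain \<kappa> \<theta> where k: "\<kappa> > 0" "0 < \<theta>" "\<theta> \<le> 1"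
      "\<forall>x m. nonneg_vec x \<and> m > 0 \<and> (\<forall>k\<in>T. m \<le> x$k) \<longrightarrow> \<kappa> * m * (x$j / m) powr \<theta> \<le> h x"
      using sgood_growth[OF h] by blast
    show ?thesis
    proof (intro exI conjI allI impI)
      fix x m assume "nonneg_vec x \<and> m > 0 \<and> (\<forall>k\<in>S \<union> T. m \<le> x$k)"
      then show "\<kappa> * m * (x$j / m) powr \<theta> \<le> g x + h x"
        using k(4) sgood_nonneg[OF g, of x] by (smt (verit) UnCI)
    qed (use k in auto)
  qed
qed

lemma sgood_scale:
  fixes g :: "real^'n \<Rightarrow> real"
  assumes g: "sgood g S" and c: "c > 0"
  shows "sgood (\<lambda>x. c * g x) S"
proof (rule sgoodI)
  fix x :: "real^'n" assume "nonneg_vec x" then show "0 \<le> c * g x"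
    using sgood_nonneg[OF g] c by simp
next
  fix x y :: "real^'n" assume "nonneg_vec x" "\<forall>i. x$i \<le> y$i"
  then show "c * g x \<le> c * g y" using sgood_mono[OF g] c by (simp add: mult_left_mono)
next
  fix x :: "real^'n" and t :: real assume "nonneg_vec x" "t > 0"
  then show "c * g (t *\<^sub>R x) = t * (c * g x)"
    using sgood_homog[OF g] by simp
next
  show "continuous_on {x. nonneg_vec x} (\<lambda>x. c * g x)"
    using g sgood_cont by (intro continuous_on_mult continuous_on_const) auto
next
  fix x y :: "real^'n" assume "nonneg_vec x" "nonneg_vec y" "\<forall>j\<in>S. x$j = y$j"
  then show "c * g x = c * g y"
    using sgood_indep[OF g, of x y] by auto
next
  fix j a b assume a: "j \<in> S" "nonneg_vec a" "pos_vec b" "\<forall>k. a$k \<le> b$k" "a$j < b$j"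
  show "c * g a < c * g b" using sgood_strict[OF g a] c by simp
next
  show "c * g vone > 0" using sgood_one[OF g] c by simp
next
  fix j assume j: "j \<in> S"
  then obtain \<kappa> \<theta> where k: "\<kappa> > 0" "0 < \<theta>" "\<theta> \<le> 1"
      "\<forall>x m. nonneg_vec x \<and> m > 0 \<and> (\<forall>k\<in>S. m \<le> x$k) \<longrightarrow> \<kappa> * m * (x$j / m) powr \<theta> \<le> g x"
      using sgood_growth[OF g] by blast
  show "\<exists>\<kappa> \<theta>. \<kappa> > 0 \<and> 0 < \<theta> \<and> \<theta> \<le> 1 \<and>
     (\<forall>x m. nonneg_vec x \<and> m > 0 \<and> (\<forall>k\<in>S. m \<le> x$k) \<longrightarrow> \<kappa> * m * (x$j / m) powr \<theta> \<le> c * g x)"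
  proof (intro exI conjI allI impI)
    fix x m assume a: "nonneg_vec x \<and> m > 0 \<and> (\<forall>k\<in>S. m \<le> x$k)"
    then have "\<kappa> * m * (x$j / m) powr \<theta> \<le> g x" using k(4) by blast
    then show "(c * \<kappa>) * m * (x$j / m) powr \<theta> \<le> c * g x"
      using c by (simp add: mult.assoc mult_left_mono)
  qed (use k c in auto)
qed

lemma sgood_sum:
  fixes g :: "nat \<Rightarrow> real^'n \<Rightarrow> real"
  assumes "finite A" "A \<noteq> {}" "\<forall>k\<in>A. sgood (g k) (S k)"
  shows "sgood (\<lambda>x. \<Sum>k\<in>A. g k x) (\<Union>k\<in>A. S k)"
  using assms
proof (induction A rule: finite_ne_induct)
  case (singleton k) then show ?case by simp
next
  case (insert k A)
  then have "sgood (\<lambda>x. g k x + (\<Sum>k\<in>A. g k x)) (S k \<union> (\<Union>k\<in>A. S k))"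
    by (intro sgood_add) auto
  then show ?case using insert by simp
qed

definition good :: "(real^'n \<Rightarrow> real^'n) \<Rightarrow> ('n \<Rightarrow> 'n set) \<Rightarrow> bool" where
  "good f D \<longleftrightarrow> (\<forall>i. sgood (\<lambda>x. f x $ i) (D i))"

lemma good_Mplus:
  fixes f :: "real^'n \<Rightarrow> real^'n"
  assumes "f \<in> Mplus" shows "\<exists>D. good f D"
proof -
  have "\<forall>i. \<exists>D. sgood (\<lambda>x. f x $ i) D"
  proof
    fix i
    obtain K c r \<sigma> where K: "(K::nat) > 0" "\<forall>k<K. c k > 0 \<and> r k \<ge> 0 \<and> prob_vec (\<sigma> k)"
      "\<forall>x. nonneg_vec x \<longrightarrow> f x $ i = (\<Sum>k<K. c k * rmean (r k) (\<sigma> k) x)"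
      using assms unfolding Mplus_def by blast
    have "sgood (\<lambda>x. \<Sum>k\<in>{..<K}. c k * rmean (r k) (\<sigma> k) x) (\<Union>k\<in>{..<K}. {j. \<sigma> k $ j > 0})"
      apply (rule sgood_sum)
      using K by (auto intro!: sgood_scale sgood_rmean)
    then have "sgood (\<lambda>x. f x $ i) (\<Union>k\<in>{..<K}. {j. \<sigma> k $ j > 0})"
      by (rule sgood_cong) (use K(3) in auto)
    then show "\<exists>D. sgood (\<lambda>x. f x $ i) D" by blast
  qed
  then obtain D where "\<forall>i. sgood (\<lambda>x. f x $ i) (D i)" by metis
  then show ?thesis unfolding good_def by blast
qed

lemma good_add:
  assumes "good f D" "good g E"
  shows "good (\<lambda>x. f x + g x) (\<lambda>i. D i \<union> E i)"
  using assms unfolding good_def by (simp add: sgood_add)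

lemma good_sgood: "good f D \<Longrightarrow> sgood (\<lambda>x. f x $ i) (D i)"
  unfolding good_def by blast

lemma good_nonneg: "good f D \<Longrightarrow> nonneg_vec x \<Longrightarrow> nonneg_vec (f x)"
  unfolding nonneg_vec_def using good_sgood sgood_nonneg nonneg_vec_def by blast
lemma good_mono: "good f D \<Longrightarrow> nonneg_vec x \<Longrightarrow> (\<forall>i. x$i \<le> y$i) \<Longrightarrow> f x $ i \<le> f y $ i"
  using good_sgood sgood_mono by blast
lemma good_homog: "good f D \<Longrightarrow> nonneg_vec x \<Longrightarrow> t > 0 \<Longrightarrow> f (t *\<^sub>R x) = t *\<^sub>R f x"
  using good_sgood sgood_homog by (simp add: vec_eq_iff) blast
lemma good_homog_i: assumes "good f D" "nonneg_vec x" "t > 0" shows "f (t *\<^sub>R x) $ i = t * f x $ i"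
  using good_homog[OF assms] by simp
lemma good_cont: "good f D \<Longrightarrow> continuous_on {x. nonneg_vec x} f"
proof -
  assume g: "good f D"
  have "continuous_on {x. nonneg_vec x} (\<lambda>x. \<chi> i. f x $ i)"
    using good_sgood[OF g] sgood_cont by (intro continuous_on_vec_lambda) blast
  then show ?thesis by simp
qed
lemma good_indep: "good f D \<Longrightarrow> nonneg_vec x \<Longrightarrow> nonneg_vec y \<Longrightarrow> (\<forall>j\<in>D i. x$j = y$j) \<Longrightarrow> f x $ i = f y $ i"
  using good_sgood sgood_indep by blast
lemma good_strict: "good f D \<Longrightarrow> j \<in> D i \<Longrightarrow> nonneg_vec a \<Longrightarrow> pos_vec b \<Longrightarrow> (\<forall>k. a$k \<le> b$k) \<Longrightarrow> a$j < b$j \<Longrightarrow> f a $ i < f b $ i"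
  using good_sgood sgood_strict by blast
lemma good_one: "good f D \<Longrightarrow> f vone $ i > 0"
  using good_sgood sgood_one by blast
lemma good_growth: "good f D \<Longrightarrow> j \<in> D i \<Longrightarrow> \<exists>\<kappa> \<theta>. \<kappa> > 0 \<and> 0 < \<theta> \<and> \<theta> \<le> 1 \<and>
     (\<forall>x m. nonneg_vec x \<and> m > 0 \<and> (\<forall>k\<in>D i. m \<le> x$k) \<longrightarrow> \<kappa> * m * (x$j / m) powr \<theta> \<le> f x $ i)"
  using good_sgood sgood_growth by blast

lemma vone_nonneg: "nonneg_vec vone" by (simp add: nonneg_vec_def vone_def)
lemma vone_pos: "pos_vec vone" by (simp add: pos_vec_def vone_def)

lemma good_lower:
  assumes g: "good f D" and x: "nonneg_vec x" and m: "m \<ge> 0" and b: "\<forall>k\<in>D i. m \<le> x$k"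
  shows "m * f vone $ i \<le> f x $ i"
proof (cases "m = 0")
  case True then show ?thesis using good_nonneg[OF g x] by (simp add: nonneg_vec_def)
next
  case False
  then have mp: "m > 0" using m by simp
  define x' where "x' = (\<chi> k. if k \<in> D i then x$k else m)"
  have x'n: "nonneg_vec x'" using x m unfolding x'_def nonneg_vec_def by auto
  have "f x $ i = f x' $ i" by (rule good_indep[OF g x x'n]) (simp add: x'_def)
  moreover have "f (m *\<^sub>R vone) $ i \<le> f x' $ i"
    apply (rule good_mono[OF g])
    using m b by (auto simp: nonneg_vec_def vone_def x'_def)
  moreover have "f (m *\<^sub>R vone) $ i = m * f vone $ i"
    using good_homog_i[OF g vone_nonneg mp] .
  ultimately show ?thesis by simp
qed

definition vmin :: "real^'n \<Rightarrow> real" where "vmin x = Min (range (\<lambda>i. x$i))"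

lemma vmin_le: "vmin x \<le> x$i"
  unfolding vmin_def by (rule Min_le) auto
lemma vmin_pos: "pos_vec x \<Longrightarrow> vmin x > 0"
  unfolding vmin_def pos_vec_def by (subst Min_gr_iff) auto
lemma vmin_attained: "\<exists>i. vmin x = x$i"
proof -
  have "Min (range (\<lambda>i. x$i)) \<in> range (\<lambda>i. x$i)" by (rule Min_in) auto
  then show ?thesis unfolding vmin_def by blast
qed

lemma good_pos:
  assumes g: "good f D" and x: "pos_vec x" shows "pos_vec (f x)"
  unfolding pos_vec_def
proof
  fix i
  have "vmin x * f vone $ i \<le> f x $ i"
  proof -
    have "\<forall>k\<in>D i. vmin x \<le> x$k" using vmin_le by blast
    then show ?thesis using good_lower[OF g pos_nonneg[OF x], of "vmin x" i] vmin_pos[OF x] by (simp add: less_imp_le)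
  qed
  moreover have "vmin x * f vone $ i > 0" using vmin_pos[OF x] good_one[OF g] by simp
  ultimately show "f x $ i > 0" by simp
qed

lemma comp_growth_alg:
  fixes \<kappa> c \<kappa>' m X \<theta> \<theta>' :: real
  assumes "\<kappa> > 0" "c > 0" "\<kappa>' > 0" "m > 0" "X \<ge> 0"
  shows "\<kappa> * c powr (1-\<theta>) * \<kappa>' powr \<theta> * m * X powr (\<theta>*\<theta>') = \<kappa> * (m*c) * ((\<kappa>' * m * X powr \<theta>')/(m*c)) powr \<theta>"
proof -
  have e1: "(\<kappa>' * m * X powr \<theta>')/(m*c) = \<kappa>' * X powr \<theta>' / c" using assms by simp
  have e2: "(\<kappa>' * X powr \<theta>' / c) powr \<theta> = \<kappa>' powr \<theta> * X powr (\<theta>*\<theta>') / c powr \<theta>"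
    using assms by (simp add: powr_divide powr_mult powr_powr mult.commute)
  have e3: "c powr (1-\<theta>) = c / c powr \<theta>" using assms by (simp add: powr_diff)
  show ?thesis unfolding e1 e2 e3 using assms by (simp add: field_simps)
qed

lemma good_comp:
  fixes f g :: "real^'n \<Rightarrow> real^'n"
  assumes f: "good f D" and g: "good g E"
  shows "good (f \<circ> g) (\<lambda>i. \<Union>l\<in>D i. E l)"
  unfolding good_def
proof (intro allI sgoodI)
  fix i
  define c where "c = vmin (g vone)"
  have cpos: "c > 0" unfolding c_def by (rule vmin_pos[OF good_pos[OF g vone_pos]])
  fix x :: "real^'n" assume "nonneg_vec x" then show "0 \<le> (f \<circ> g) x $ i"
    using good_nonneg[OF f good_nonneg[OF g]] by (simp add: nonneg_vec_def)
next
  fix i x y assume "nonneg_vec x" "\<forall>i. (x::real^'n)$i \<le> y$i"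
  then show "(f \<circ> g) x $ i \<le> (f \<circ> g) y $ i"
    using good_mono[OF f good_nonneg[OF g]] good_mono[OF g] by simp
next
  fix i and x :: "real^'n" and t :: real assume "nonneg_vec x" "t > 0"
  then show "(f \<circ> g) (t *\<^sub>R x) $ i = t * (f \<circ> g) x $ i"
    using good_homog[OF g] good_homog_i[OF f good_nonneg[OF g]] by simp
next
  fix i
  have "continuous_on {x. nonneg_vec x} (\<lambda>x. f (g x))"
    apply (rule continuous_on_compose2[OF good_cont[OF f] good_cont[OF g]])
    using good_nonneg[OF g] by auto
  then show "continuous_on {x. nonneg_vec x} (\<lambda>x. (f \<circ> g) x $ i)"
    by (auto intro: continuous_on_component simp: o_def)
next
  fix i x y assume a: "nonneg_vec x" "nonneg_vec y" "\<forall>j\<in>\<Union>l\<in>D i. E l. (x::real^'n)$j = y$j"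
  have "\<forall>l\<in>D i. g x $ l = g y $ l"
    using a good_indep[OF g a(1,2)] by blast
  then show "(f \<circ> g) x $ i = (f \<circ> g) y $ i"
    using good_indep[OF f good_nonneg[OF g a(1)] good_nonneg[OF g a(2)]] by simp
next
  fix i j a b assume a: "j \<in> (\<Union>l\<in>D i. E l)" "nonneg_vec a" "pos_vec b" "\<forall>k. (a::real^'n)$k \<le> b$k" "a$j < b$j"
  then obtain l where l: "l \<in> D i" "j \<in> E l" by blast
  have "g a $ l < g b $ l" using good_strict[OF g l(2) a(2-5)] .
  moreover have "\<forall>k. g a $ k \<le> g b $ k" using good_mono[OF g a(2)] a(4) by blast
  ultimately show "(f \<circ> g) a $ i < (f \<circ> g) b $ i"
    using good_strict[OF f l(1) good_nonneg[OF g a(2)] good_pos[OF g a(3)]] by simp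
next
  fix i
  define c where "c = vmin (g vone)"
  have cpos: "c > 0" unfolding c_def by (rule vmin_pos[OF good_pos[OF g vone_pos]])
  have "\<forall>k\<in>D i. c \<le> g vone $ k" using vmin_le unfolding c_def by blast
  then have "c * f vone $ i \<le> f (g vone) $ i"
    using good_lower[OF f good_nonneg[OF g vone_nonneg], of c i] cpos
    by (simp add: less_imp_le)
  moreover have "c * f vone $ i > 0" using cpos good_one[OF f] by simp
  ultimately show "(f \<circ> g) vone $ i > 0" by simp
next
  fix i j assume j: "j \<in> (\<Union>l\<in>D i. E l)"
  then obtain l where l: "l \<in> D i" "j \<in> E l" by blast
  define c where "c = vmin (g vone)"
  have cpos: "c > 0" unfolding c_def by (rule vmin_pos[OF good_pos[OF g vone_pos]])
  obtain \<kappa> \<theta> where k: "\<kappa> > 0" "0 < \<theta>" "\<theta> \<le> 1"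
    "\<forall>x m. nonneg_vec x \<and> m > 0 \<and> (\<forall>k\<in>D i. m \<le> x$k) \<longrightarrow> \<kappa> * m * (x$l / m) powr \<theta> \<le> f x $ i"
    using good_growth[OF f l(1)] by blast
  obtain \<kappa>' \<theta>' where k': "\<kappa>' > 0" "0 < \<theta>'" "\<theta>' \<le> 1"
    "\<forall>x m. nonneg_vec x \<and> m > 0 \<and> (\<forall>k\<in>E l. m \<le> x$k) \<longrightarrow> \<kappa>' * m * (x$j / m) powr \<theta>' \<le> g x $ l"
    using good_growth[OF g l(2)] by blast
  show "\<exists>\<kappa> \<theta>. \<kappa> > 0 \<and> 0 < \<theta> \<and> \<theta> \<le> 1 \<and>
     (\<forall>x m. nonneg_vec x \<and> m > 0 \<and> (\<forall>k\<in>(\<Union>l\<in>D i. E l). m \<le> x$k) \<longrightarrow> \<kappa> * m * (x$j / m) powr \<theta> \<le> (f \<circ> g) x $ i)"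
  proof (intro exI conjI allI impI)
    show "\<kappa> * c powr (1-\<theta>) * \<kappa>' powr \<theta> > 0" using k k' cpos by simp
    show "0 < \<theta> * \<theta>'" using k k' by simp
    show "\<theta> * \<theta>' \<le> 1" using k k' by (simp add: mult_le_one)
    fix x m assume a: "nonneg_vec x \<and> m > 0 \<and> (\<forall>k\<in>(\<Union>l\<in>D i. E l). m \<le> x$k)"
    then have xn: "nonneg_vec x" and mp: "m > 0" by auto
    have gn: "nonneg_vec (g x)" using good_nonneg[OF g xn] .
    have lb: "\<forall>l'\<in>D i. m * c \<le> g x $ l'"
    proof
      fix l' assume l': "l' \<in> D i"
      have "m * g vone $ l' \<le> g x $ l'"
        using good_lower[OF g xn] mp a l' by (simp add: less_imp_le)
      moreover have "m * c \<le> m * g vone $ l'" using mp vmin_le unfolding c_def by simp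
      ultimately show "m * c \<le> g x $ l'" by simp
    qed
    have F: "\<kappa> * (m*c) * (g x $ l / (m*c)) powr \<theta> \<le> f (g x) $ i"
      using k(4) gn mp cpos lb by simp
    have G: "\<kappa>' * m * (x$j / m) powr \<theta>' \<le> g x $ l"
      using k'(4) xn mp a l by blast
    have xj: "x$j / m \<ge> 0" using xn mp by (simp add: nonneg_vec_def)
    have "(\<kappa>' * m * (x$j / m) powr \<theta>' / (m*c)) powr \<theta> \<le> (g x $ l / (m*c)) powr \<theta>"
    proof (rule powr_mono2)
      show "\<kappa>' * m * (x$j / m) powr \<theta>' / (m*c) \<le> g x $ l / (m*c)"
        using G mp cpos by (intro divide_right_mono) auto
    qed (use k k' mp cpos in auto)
    then have prev: "\<kappa> * (m*c) * (\<kappa>' * m * (x$j / m) powr \<theta>' / (m*c)) powr \<theta> \<le> f (g x) $ i"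
      using F k mp cpos by (smt (verit) mult_left_mono mult_pos_pos)
    have eq: "\<kappa> * c powr (1-\<theta>) * \<kappa>' powr \<theta> * m * (x$j / m) powr (\<theta>*\<theta>') = \<kappa> * (m*c) * (\<kappa>' * m * (x$j / m) powr \<theta>' / (m*c)) powr \<theta>"
      by (rule comp_growth_alg[OF k(1) cpos k'(1) mp xj])
    show "\<kappa> * c powr (1-\<theta>) * \<kappa>' powr \<theta> * m * (x$j / m) powr (\<theta>*\<theta>') \<le> (f \<circ> g) x $ i"
      using prev by (simp only: eq o_apply)
  qed
qed

lemma good_Mplus_cl:
  fixes f :: "real^'n \<Rightarrow> real^'n"
  assumes "f \<in> Mplus_cl" shows "\<exists>D. good f D"
  using assms
proof (induction rule: Mplus_cl.induct)
  case (base f) then show ?case using good_Mplus by blast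
next
  case (add f g) then show ?case using good_add by blast
next
  case (comp f g) then show ?case using good_comp by blast
qed

section \<open>Graph\<close>

lemma exp_unit_nonneg: "nonneg_vec (exp_unit t j)"
  by (simp add: nonneg_vec_def exp_unit_def)

lemma arc_iff:
  assumes g: "good f D" shows "arc f i j \<longleftrightarrow> j \<in> D i"
proof
  assume a: "arc f i j"
  show "j \<in> D i"
  proof (rule ccontr)
    assume nj: "j \<notin> D i"
    have c: "f (exp_unit t j) $ i = f vone $ i" for t
      by (rule good_indep[OF g exp_unit_nonneg vone_nonneg])
         (use nj in \<open>auto simp: exp_unit_def vone_def\<close>)
    have "eventually (\<lambda>t. f vone $ i + 1 \<le> f (exp_unit t j) $ i) at_top"
      using a unfolding arc_def filterlim_at_top by blast
    then have "eventually (\<lambda>t::real. False) at_top" by (simp add: c)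
    then show False by simp
  qed
next
  assume j: "j \<in> D i"
  obtain \<kappa> \<theta> where k: "\<kappa> > 0" "0 < \<theta>" "\<theta> \<le> 1"
    "\<forall>x m. nonneg_vec x \<and> m > 0 \<and> (\<forall>k\<in>D i. m \<le> x$k) \<longrightarrow> \<kappa> * m * (x$j / m) powr \<theta> \<le> f x $ i"
    using good_growth[OF g j] by blast
  have lb: "\<kappa> * \<theta> * t \<le> f (exp_unit t j) $ i" if t: "t \<ge> 0" for t
  proof -
    have "\<forall>k\<in>D i. 1 \<le> exp_unit t j $ k" using t by (auto simp: exp_unit_def)
    then have "\<kappa> * 1 * (exp_unit t j $ j / 1) powr \<theta> \<le> f (exp_unit t j) $ i"
      by (intro k(4)[rule_format]) (simp add: exp_unit_nonneg)
    moreover have "exp_unit t j $ j = exp t" by (simp add: exp_unit_def)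
    moreover have "t * \<theta> \<le> exp (t * \<theta>)"
    proof -
      have "1 + t * \<theta> \<le> exp (t * \<theta>)" by (rule exp_ge_add_one_self)
      then show ?thesis by linarith
    qed
    ultimately have A: "\<kappa> * exp (t * \<theta>) \<le> f (exp_unit t j) $ i" "t * \<theta> \<le> exp (t * \<theta>)"
      by (simp_all add: exp_powr_real)
    have "\<kappa> * (t * \<theta>) \<le> \<kappa> * exp (t * \<theta>)" using A(2) k(1) by (intro mult_left_mono) auto
    then show ?thesis using A(1) by (simp add: algebra_simps)
  qed
  have "filterlim (\<lambda>t. (\<kappa> * \<theta>) * t) at_top at_top"
    by (rule filterlim_tendsto_pos_mult_at_top[OF tendsto_const]) (use k in \<open>auto simp: filterlim_ident\<close>)
  then show "arc f i j" unfolding arc_def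
    by (rule filterlim_at_top_mono) (use lb in \<open>auto simp: eventually_at_top_linorder\<close>)
qed

lemma reach_refl: "reach f i i" by (simp add: reach_def)
lemma reach_trans: "reach f i j \<Longrightarrow> reach f j k \<Longrightarrow> reach f i k"
  unfolding reach_def by auto
lemma arc_reach: "arc f i j \<Longrightarrow> reach f i j"
  unfolding reach_def by auto
lemma reach_arc_trans: "reach f i j \<Longrightarrow> arc f j k \<Longrightarrow> reach f i k"
  unfolding reach_def by (auto intro: rtrancl_into_rtrancl)

lemma path_exit:
  assumes "reach f a b" "a \<in> A" "b \<notin> A"
  shows "\<exists>c\<in>A. \<exists>d. d \<notin> A \<and> arc f c d"
proof -
  have "(a, b) \<in> {(a, b). arc f a b}\<^sup>*" using assms(1) by (simp add: reach_def)
  then show ?thesis using assms(3)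
  proof (induction rule: rtrancl_induct)
    case base then show ?case using assms(2) by simp
  next
    case (step y z)
    then show ?case by (cases "y \<in> A") auto
  qed
qed

definition closedG :: "(real^'n \<Rightarrow> real^'n) \<Rightarrow> 'n set \<Rightarrow> bool" where
  "closedG f S \<longleftrightarrow> (\<forall>i j. i \<in> S \<and> arc f i j \<longrightarrow> j \<in> S)"

lemma closedG_reach: "closedG f S \<Longrightarrow> i \<in> S \<Longrightarrow> reach f i j \<Longrightarrow> j \<in> S"
  using path_exit[of f i j S] unfolding closedG_def by blast

lemma scc_member:
  assumes "scc f C" "j \<in> C" shows "C = {k. reach f j k \<and> reach f k j}"
proof -
  obtain i where C: "C = {j. reach f i j \<and> reach f j i}" using assms(1) scc_def by blast
  then have ij: "reach f i j" "reach f j i" using assms(2) by auto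
  show ?thesis unfolding C using ij reach_trans by blast
qed

lemma scc_disjoint:
  assumes "scc f C1" "scc f C2" "C1 \<noteq> C2" shows "C1 \<inter> C2 = {}"
  using scc_member[OF assms(1)] scc_member[OF assms(2)] assms(3) by blast

lemma scc_nonempty: "scc f C \<Longrightarrow> C \<noteq> {}"
  unfolding scc_def using reach_refl by blast

lemma sink_lemma:
  fixes f :: "real^'n \<Rightarrow> real^'n"
  assumes "i \<in> A" "\<forall>i'\<in>A. card {j\<in>A. reach f i j} \<le> card {j\<in>A. reach f i' j}"
    "reach f i c" "arc f c d" "d \<in> A"
  shows "reach f d i"
proof -
  have id: "reach f i d" using assms(3,4) reach_arc_trans by blast
  have sub: "{j\<in>A. reach f d j} \<subseteq> {j\<in>A. reach f i j}" using id reach_trans by blast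
  have "card {j\<in>A. reach f i j} \<le> card {j\<in>A. reach f d j}" using assms(2,5) by blast
  moreover have "card {j\<in>A. reach f d j} \<le> card {j\<in>A. reach f i j}" by (rule card_mono[OF _ sub]) simp
  ultimately have "{j\<in>A. reach f d j} = {j\<in>A. reach f i j}"
    using sub by (intro card_subset_eq) auto
  then show ?thesis using assms(1) reach_refl by blast
qed

lemma exists_min_card:
  fixes A :: "'n::finite set" and h :: "'n \<Rightarrow> nat"
  assumes "A \<noteq> {}" shows "\<exists>i\<in>A. \<forall>i'\<in>A. h i \<le> h i'"
proof -
  have "Min (h ` A) \<in> h ` A" by (rule Min_in) (use assms in auto)
  then obtain i where "i \<in> A" "h i = Min (h ` A)" by auto
  then show ?thesis by (metis Min_le finite finite_imageI imageI)
qed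

lemma closed_contains_final:
  fixes f :: "real^'n \<Rightarrow> real^'n"
  assumes "closedG f E" "E \<noteq> {}"
  shows "\<exists>C. final_class f C \<and> C \<subseteq> E"
proof -
  obtain i where i: "i \<in> E" "\<forall>i'\<in>E. card {j\<in>E. reach f i j} \<le> card {j\<in>E. reach f i' j}"
    using exists_min_card[OF assms(2), of "\<lambda>i. card {j\<in>E. reach f i j}"] by blast
  define C where "C = {j. reach f i j \<and> reach f j i}"
  have sccC: "scc f C" unfolding scc_def C_def by blast
  have CE: "C \<subseteq> E" unfolding C_def using closedG_reach[OF assms(1) i(1)] by blast
  have "\<forall>c d. c \<in> C \<and> arc f c d \<longrightarrow> d \<in> C"
  proof (intro allI impI)
    fix c d assume cd: "c \<in> C \<and> arc f c d"
    then have "d \<in> E" using assms(1) CE unfolding closedG_def by blast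
    then have "reach f d i" using sink_lemma[OF i, of c d] cd unfolding C_def by blast
    then show "d \<in> C" unfolding C_def using cd reach_arc_trans unfolding C_def by blast
  qed
  then show ?thesis using sccC CE unfolding final_class_def by blast
qed

lemma next_class:
  fixes f :: "real^'n \<Rightarrow> real^'n"
  assumes "closedG f S" "S \<noteq> UNIV"
  shows "\<exists>C. scc f C \<and> C \<inter> S = {} \<and> (\<forall>c d. c \<in> C \<and> arc f c d \<longrightarrow> d \<in> C \<or> d \<in> S)"
proof -
  let ?A = "- S"
  have "?A \<noteq> {}" using assms(2) by auto
  then obtain i where i: "i \<in> ?A" "\<forall>i'\<in>?A. card {j\<in>?A. reach f i j} \<le> card {j\<in>?A. reach f i' j}"
    using exists_min_card[of ?A "\<lambda>i. card {j\<in>?A. reach f i j}"] by blast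
  define C where "C = {j. reach f i j \<and> reach f j i}"
  have sccC: "scc f C" unfolding scc_def C_def by blast
  have CS: "C \<inter> S = {}"
  proof (rule ccontr)
    assume "C \<inter> S \<noteq> {}"
    then obtain j where "j \<in> S" "reach f j i" unfolding C_def by blast
    then have "i \<in> S" using closedG_reach[OF assms(1)] by blast
    then show False using i by simp
  qed
  have "\<forall>c d. c \<in> C \<and> arc f c d \<longrightarrow> d \<in> C \<or> d \<in> S"
  proof (intro allI impI)
    fix c d assume cd: "c \<in> C \<and> arc f c d"
    show "d \<in> C \<or> d \<in> S"
    proof (cases "d \<in> S")
      case False
      then have "reach f d i" using sink_lemma[OF i, of c d] cd unfolding C_def by blast
      then show ?thesis unfolding C_def using cd reach_arc_trans unfolding C_def by blast
    qed simp
  qed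
  then show ?thesis using sccC CS by blast
qed

lemma final_closed: "final_class f C \<Longrightarrow> closedG f C"
  unfolding final_class_def closedG_def by blast

lemma grow:
  assumes "finite C" "P {}" "\<And>T. T \<subseteq> C \<Longrightarrow> T \<noteq> C \<Longrightarrow> P T \<Longrightarrow> \<exists>k\<in>C-T. P (insert k T)"
  shows "P C"
proof -
  have "\<forall>T. T \<subseteq> C \<and> P T \<and> card (C - T) = n \<longrightarrow> P C" for n
  proof (induction n)
    case 0 then show ?case using assms(1)
      by (metis Diff_eq_empty_iff card_0_eq finite_Diff subset_antisym)
  next
    case (Suc n)
    show ?case
    proof (intro allI impI)
      fix T assume T: "T \<subseteq> C \<and> P T \<and> card (C - T) = Suc n"
      then have "T \<noteq> C" by auto
      then obtain k where k: "k \<in> C - T" "P (insert k T)" using assms(3) T by blast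
      have "card (C - insert k T) = n" using T k assms(1)
        by (metis Diff_insert card_Diff_singleton diff_Suc_1 finite_Diff)
      moreover have "insert k T \<subseteq> C" using T k by auto
      ultimately show "P C" using Suc.IH k(2) by blast
    qed
  qed
  then show ?thesis using assms(2) by blast
qed

definition ratio :: "(real^'n \<Rightarrow> real^'n) \<Rightarrow> real^'n \<Rightarrow> real" where
  "ratio g x = Max (range (\<lambda>i. g x $ i / x $ i))"

lemma cone_r_ratio: "cone_r g = Inf (ratio g ` {x. pos_vec x})"
  unfolding cone_r_def ratio_def[abs_def] by (rule refl)

lemma ratio_ge: "g x $ i / x $ i \<le> ratio g x"
  unfolding ratio_def by (rule Max_ge) auto

lemma ratio_less_iff: "ratio g x < c \<longleftrightarrow> (\<forall>i. g x $ i / x $ i < c)"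
proof -
  have "ratio g x < c \<longleftrightarrow> (\<forall>a\<in>range (\<lambda>i. g x $ i / x $ i). a < c)"
    unfolding ratio_def by (rule Max_less_iff) auto
  then show ?thesis by simp
qed

lemma ratio_le_iff: "ratio g x \<le> c \<longleftrightarrow> (\<forall>i. g x $ i / x $ i \<le> c)"
proof -
  have "ratio g x \<le> c \<longleftrightarrow> (\<forall>a\<in>range (\<lambda>i. g x $ i / x $ i). a \<le> c)"
    unfolding ratio_def by (rule Max_le_iff) auto
  then show ?thesis by simp
qed

lemma cone_r_le:
  assumes "\<And>y. pos_vec y \<Longrightarrow> nonneg_vec (g y)" "pos_vec x"
  shows "cone_r g \<le> ratio g x"
proof -
  have "bdd_below (ratio g ` {x. pos_vec x})"
  proof (rule bdd_belowI[of _ 0])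
    fix r assume "r \<in> ratio g ` {x. pos_vec x}"
    then obtain y where y: "pos_vec y" "r = ratio g y" by auto
    obtain i0 :: 'a where True by simp
    have "g y $ i0 / y $ i0 \<ge> 0" using assms(1)[OF y(1)] y(1)
      by (simp add: nonneg_vec_def pos_vec_def less_imp_le)
    then show "0 \<le> r" using y ratio_ge[of g y i0] by linarith
  qed
  moreover have "ratio g x \<in> ratio g ` {x. pos_vec x}" using assms(2) by simp
  ultimately show ?thesis unfolding cone_r_ratio by (rule cInf_lower[rotated])
qed

lemma cone_r_ge:
  assumes "\<And>y. pos_vec y \<Longrightarrow> c \<le> ratio g y"
  shows "c \<le> cone_r g"
  unfolding cone_r_ratio
proof (rule cInf_greatest)
  show "ratio g ` {x. pos_vec x} \<noteq> {}" using vone_pos by blast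
  fix r assume "r \<in> ratio g ` {x. pos_vec x}"
  then show "c \<le> r" using assms by blast
qed

lemma cone_r_less:
  assumes "cone_r g < c" shows "\<exists>x. pos_vec x \<and> ratio g x < c"
proof -
  have "ratio g ` {x. pos_vec x} \<noteq> {}" using vone_pos by blast
  then obtain r where "r \<in> ratio g ` {x. pos_vec x}" "r < c"
    using cInf_lessD[of "ratio g ` {x. pos_vec x}" c] assms unfolding cone_r_ratio by blast
  then show ?thesis by blast
qed

lemma proj0_nth: "proj0 J x $ j = (if j \<in> J then x $ j else 0)"
  by (simp add: proj0_def)

lemma restr0_nth: "restr0 f C x $ i = (if i \<in> C then f (proj0 C x) $ i else 0)"
  by (simp add: restr0_def proj0_def)

lemma proj0_nonneg: "nonneg_vec x \<Longrightarrow> nonneg_vec (proj0 J x)"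
  by (simp add: nonneg_vec_def proj0_def)

lemma restr0_nonneg: assumes "good f D" "nonneg_vec x" shows "nonneg_vec (restr0 f C x)"
proof -
  have "nonneg_vec (f (proj0 C x))" using good_nonneg[OF assms(1) proj0_nonneg[OF assms(2)]] .
  then show ?thesis by (simp add: nonneg_vec_def restr0_nth)
qed

lemma restr0_UNIV: "restr0 f UNIV = f"
  by (rule ext) (simp add: restr0_def proj0_def)

lemma proj0_indep:
  assumes g: "good f D" "D i \<subseteq> C" "nonneg_vec x"
  shows "f (proj0 C x) $ i = f x $ i"
  by (rule good_indep[OF g(1) proj0_nonneg[OF g(3)] g(3)]) (use g(2) in \<open>auto simp: proj0_def\<close>)

text \<open>Collatz-Wielandt for an eigenvector on a closed set.\<close>
lemma CW:
  fixes f :: "real^'n \<Rightarrow> real^'n" and x :: "real^'n"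
  assumes g: "good f D" and C: "C \<noteq> {}" "\<forall>i\<in>C. D i \<subseteq> C"
    and x: "pos_vec x" "\<forall>i\<in>C. f x $ i = lam * x$i"
  shows "cone_r (restr0 f C) = lam"
proof -
  have xn: "nonneg_vec x" using pos_nonneg[OF x(1)] .
  obtain i0 where i0: "i0 \<in> C" using C by auto
  have lpos: "lam > 0"
  proof -
    have "f x $ i0 > 0" using good_pos[OF g x(1)] by (simp add: pos_vec_def)
    then show ?thesis using x i0 by (simp add: pos_vec_def zero_less_mult_iff)
      (metis less_asym pos_vec_def x(1))
  qed
  have fx: "f (proj0 C x) $ i = lam * x$i" if "i \<in> C" for i
    using proj0_indep[OF g C(2)[rule_format, OF that] xn] x(2) that by simp
  have le: "cone_r (restr0 f C) \<le> lam"
  proof -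
    have "cone_r (restr0 f C) \<le> ratio (restr0 f C) x"
      by (rule cone_r_le) (use restr0_nonneg[OF g] pos_nonneg x in auto)
    also have "ratio (restr0 f C) x \<le> lam"
      unfolding ratio_le_iff using fx x(1) lpos by (auto simp: restr0_nth pos_vec_def less_imp_le)
    finally show ?thesis .
  qed
  have ge: "lam \<le> cone_r (restr0 f C)"
  proof (rule cone_r_ge)
    fix y :: "real^'n" assume y: "pos_vec y"
    define t where "t = Min ((\<lambda>i. y$i / x$i) ` C)"
    obtain k where k: "k \<in> C" "t = y$k / x$k"
    proof -
      have "t \<in> (\<lambda>i. y$i / x$i) ` C" unfolding t_def by (rule Min_in) (use C in auto)
      then show ?thesis using that by auto
    qed
    have tle: "t \<le> y$i / x$i" if "i \<in> C" for i unfolding t_def by (rule Min_le) (use that in auto)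
    have tpos: "t > 0" using k y x(1) by (simp add: pos_vec_def)
    have "f (t *\<^sub>R proj0 C x) $ k \<le> f (proj0 C y) $ k"
    proof (rule good_mono[OF g])
      show "nonneg_vec (t *\<^sub>R proj0 C x)" using nonneg_scale[OF proj0_nonneg[OF xn], of t C] tpos by simp
      show "\<forall>i. (t *\<^sub>R proj0 C x) $ i \<le> proj0 C y $ i"
      proof
        fix i show "(t *\<^sub>R proj0 C x) $ i \<le> proj0 C y $ i"
          using tle[of i] x(1) by (auto simp: proj0_nth pos_vec_def field_simps)
      qed
    qed
    moreover have "f (t *\<^sub>R proj0 C x) $ k = t * (lam * x$k)"
      using good_homog_i[OF g proj0_nonneg[OF xn] tpos] fx[OF k(1)] by simp
    moreover have "t * (lam * x$k) = lam * y$k"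
    proof -
      have "x$k > 0" using x(1) by (simp add: pos_vec_def)
      then show ?thesis using k by (simp add: field_simps)
    qed
    ultimately have "lam * y$k \<le> restr0 f C y $ k" using k by (simp add: restr0_nth)
    then have "lam \<le> restr0 f C y $ k / y$k" using y by (simp add: pos_vec_def field_simps)
    then show "lam \<le> ratio (restr0 f C) y" using ratio_ge order_trans by blast
  qed
  show ?thesis using le ge by simp
qed

lemma strict_lemma:
  fixes f :: "real^'n \<Rightarrow> real^'n" and x :: "real^'n"
  assumes g: "good f D" and x: "pos_vec x" and C: "C \<noteq> {}"
    and le: "\<forall>k\<in>C. f x $ k \<le> lam * x$k"
    and exp: "\<And>T. T \<subseteq> C \<Longrightarrow> T \<noteq> C \<Longrightarrow> \<exists>k\<in>C-T. f x $ k < lam * x$k \<or> (\<exists>j\<in>D k. j \<in> T \<or> j \<notin> C)"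
  shows "cone_r (restr0 f C) < lam"
proof -
  define P where "P T \<longleftrightarrow> (\<exists>y. pos_vec y \<and> (\<forall>k. y$k \<le> x$k) \<and> (\<forall>k\<in>T. y$k < x$k) \<and>
      (\<forall>k. k \<notin> T \<longrightarrow> y$k = x$k) \<and> (\<forall>k\<in>T. f (proj0 C y) $ k < lam * y$k))" for T
  have xn: "nonneg_vec x" using pos_nonneg[OF x] .
  have "P C"
  proof (rule grow)
    show "finite C" by simp
    show "P {}" unfolding P_def using x by auto
  next
    fix T assume T: "T \<subseteq> C" "T \<noteq> C" "P T"
    obtain y where y: "pos_vec y" "\<forall>k. y$k \<le> x$k" "\<forall>k\<in>T. y$k < x$k"
      "\<forall>k. k \<notin> T \<longrightarrow> y$k = x$k"
      "\<forall>k\<in>T. f (proj0 C y) $ k < lam * y$k" using T(3) unfolding P_def by blast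
    obtain k where k: "k \<in> C - T" "f x $ k < lam * x$k \<or> (\<exists>j\<in>D k. j \<in> T \<or> j \<notin> C)"
      using exp[OF T(1,2)] by blast
    have yn: "nonneg_vec y" using pos_nonneg[OF y(1)] .
    have pyle: "\<forall>i. proj0 C y $ i \<le> x $ i" using y(2) x by (auto simp: proj0_nth pos_vec_def less_imp_le)
    define a where "a = f (proj0 C y) $ k"
    have a0: "a \<ge> 0" using good_nonneg[OF g proj0_nonneg[OF yn]] by (simp add: a_def nonneg_vec_def)
    have alt: "a < lam * x$k"
    proof (cases "f x $ k < lam * x$k")
      case True
      have "a \<le> f x $ k" unfolding a_def by (rule good_mono[OF g proj0_nonneg[OF yn] pyle])
      then show ?thesis using True by simp
    next
      case False
      then obtain j where j: "j \<in> D k" "j \<in> T \<or> j \<notin> C" using k by blast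
      have "proj0 C y $ j < x $ j" using j y(3) x by (auto simp: proj0_nth pos_vec_def)
      then have "a < f x $ k" unfolding a_def
        by (rule good_strict[OF g j(1) proj0_nonneg[OF yn] x pyle])
      then show ?thesis using le k by auto
    qed
    have xk: "x$k > 0" using x by (simp add: pos_vec_def)
    have yk: "y$k = x$k" using y(4) k by blast
    have lpos: "lam > 0"
    proof (rule ccontr)
      assume "\<not> lam > 0"
      then have "lam * x$k \<le> 0" using xk by (simp add: mult_nonpos_nonneg)
      then show False using alt a0 by linarith
    qed
    define v where "v = (x$k + a/lam) / 2"
    have al: "a/lam < x$k" using alt lpos by (simp add: field_simps)
    have v1: "a/lam < v" "v < x$k"
    proof -
      obtain b where b: "b = a/lam" by simp
      have "b < x$k" using al b by simp
      then have "b < (x$k + b)/2" "(x$k + b)/2 < x$k" by (simp_all add: field_simps)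
      then show "a/lam < v" "v < x$k" unfolding v_def b by simp_all
    qed
    have v0: "v > 0"
    proof -
      have "a/lam \<ge> 0" using a0 lpos by simp
      then show ?thesis using v1 by linarith
    qed
    define y' where "y' = (\<chi> i. if i = k then v else y$i)"
    have y'pos: "pos_vec y'" using y(1) v0 by (simp add: y'_def pos_vec_def)
    have y'le: "\<forall>i. y'$i \<le> y$i" using yk v1 by (simp add: y'_def)
    have mono': "f (proj0 C y') $ i \<le> f (proj0 C y) $ i" for i
      by (rule good_mono[OF g proj0_nonneg[OF pos_nonneg[OF y'pos]]]) (use y'le in \<open>auto simp: proj0_nth\<close>)
    have "P (insert k T)" unfolding P_def
    proof (intro exI conjI)
      show "pos_vec y'" by (rule y'pos)
      show "\<forall>i. y'$i \<le> x$i" using y(2) v1 by (simp add: y'_def less_imp_le)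
      show "\<forall>i\<in>insert k T. y'$i < x$i" using y(3) v1 by (simp add: y'_def)
      show "\<forall>i. i \<notin> insert k T \<longrightarrow> y'$i = x$i" using y(4) by (simp add: y'_def)
      show "\<forall>i\<in>insert k T. f (proj0 C y') $ i < lam * y'$i"
      proof
        fix i assume i: "i \<in> insert k T"
        show "f (proj0 C y') $ i < lam * y'$i"
        proof (cases "i = k")
          case True
          have "a < lam * v" using v1 lpos by (simp add: field_simps)
          moreover have "y'$k = v" by (simp add: y'_def)
          ultimately show ?thesis using mono'[of k] True unfolding a_def by simp
        next
          case False
          then have iT: "i \<in> T" using i by simp
          have "y'$i = y$i" using False by (simp add: y'_def)
          then show ?thesis using mono'[of i] y(5) iT by fastforce
        qed
      qed
    qed
    then show "\<exists>k\<in>C-T. P (insert k T)" using k by blast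
  qed
  then obtain y where y: "pos_vec y" "\<forall>k\<in>C. f (proj0 C y) $ k < lam * y$k" unfolding P_def by blast
  obtain c where c: "c \<in> C" using C by auto
  have lpos: "lam > 0"
  proof (rule ccontr)
    assume "\<not> lam > 0"
    moreover have "y$c > 0" using y(1) by (simp add: pos_vec_def)
    ultimately have "lam * y$c \<le> 0" by (simp add: mult_nonpos_nonneg)
    moreover have "f (proj0 C y) $ c \<ge> 0" using good_nonneg[OF g proj0_nonneg[OF pos_nonneg[OF y(1)]]]
      by (simp add: nonneg_vec_def)
    ultimately show False using y(2) c by fastforce
  qed
  have "cone_r (restr0 f C) \<le> ratio (restr0 f C) y"
    by (rule cone_r_le) (use restr0_nonneg[OF g] pos_nonneg y in auto)
  also have "ratio (restr0 f C) y < lam"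
    unfolding ratio_less_iff
  proof
    fix i show "restr0 f C y $ i / y $ i < lam"
    proof (cases "i \<in> C")
      case True
      have yi: "y$i > 0" using y(1) by (simp add: pos_vec_def)
      then show ?thesis using y(2) True by (simp add: restr0_nth divide_less_eq)
    next
      case False then show ?thesis using lpos by (simp add: restr0_nth)
    qed
  qed
  finally show ?thesis .
qed

lemma eig_comp: "f x = mu *\<^sub>R x \<Longrightarrow> f x $ i = mu * x $ i"
  by simp

lemma closed_of_final:
  assumes g: "good f D" "final_class f C" "i \<in> C" shows "D i \<subseteq> C"
  using assms arc_iff[OF g(1)] unfolding final_class_def by blast

lemma cone_r_eig:
  assumes g: "good f D" and x: "pos_vec x" "f x = mu *\<^sub>R x"
  shows "cone_r f = mu"
proof -
  have "cone_r (restr0 f UNIV) = mu"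
    by (rule CW[OF g]) (use x in auto)
  then show ?thesis by (simp add: restr0_UNIV)
qed

theorem partA:
  fixes f :: "real^'n \<Rightarrow> real^'n"
  assumes g: "good f D" and e: "pos_eigvec f x"
  shows "strongly_nonneg f"
proof -
  obtain mu where x: "pos_vec x" "f x = mu *\<^sub>R x" using e unfolding pos_eigvec_def by blast
  have r: "cone_r f = mu" by (rule cone_r_eig[OF g x])
  have fin: "cone_r (restr0 f C) = cone_r f" if C: "final_class f C" for C
  proof -
    have "cone_r (restr0 f C) = mu"
    proof (rule CW[OF g])
      show "C \<noteq> {}" using C scc_nonempty unfolding final_class_def by blast
      show "\<forall>i\<in>C. D i \<subseteq> C" using closed_of_final[OF g C] by blast
    qed (use x in auto)
    then show ?thesis using r by simp
  qed
  have nfin: "cone_r (restr0 f C) < cone_r f" if C: "scc f C" "\<not> final_class f C" for C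
  proof -
    have "cone_r (restr0 f C) < mu"
    proof (rule strict_lemma[OF g x(1)])
      show "C \<noteq> {}" using C scc_nonempty by blast
      show "\<forall>k\<in>C. f x $ k \<le> mu * x$k" using x by simp
    next
      fix T assume T: "T \<subseteq> C" "T \<noteq> C"
      then obtain i0 where i0: "i0 \<in> C" "i0 \<notin> T" by blast
      have Ci0: "C = {k. reach f i0 k \<and> reach f k i0}" using scc_member[OF C(1) i0(1)] .
      obtain b where b: "reach f i0 b" "b \<notin> C - T"
      proof (cases "T = {}")
        case False
        then obtain j0 where "j0 \<in> T" by blast
        then have "reach f i0 j0" "j0 \<notin> C - T" using T Ci0 by auto
        then show ?thesis using that by blast
      next
        case True
        obtain i1 j1 where "i1 \<in> C" "arc f i1 j1" "j1 \<notin> C"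
          using C unfolding final_class_def by blast
        then have "reach f i0 j1" "j1 \<notin> C - T" using Ci0 reach_arc_trans by blast+
        then show ?thesis using that by blast
      qed
      obtain c d where cd: "c \<in> C - T" "d \<notin> C - T" "arc f c d"
        using path_exit[OF b(1) _ b(2)] i0 by blast
      have "d \<in> D c" using cd(3) arc_iff[OF g] by blast
      then show "\<exists>k\<in>C-T. f x $ k < mu * x$k \<or> (\<exists>j\<in>D k. j \<in> T \<or> j \<notin> C)"
        using cd by blast
    qed
    then show ?thesis using r by simp
  qed
  show ?thesis unfolding strongly_nonneg_def using fin nfin by blast
qed

text \<open>Tarski-type fixed point between a sub- and a supersolution.\<close>
lemma tarski_eig:
  fixes f :: "real^'n \<Rightarrow> real^'n"
  assumes g: "good f D" and mu: "mu > 0" and v: "pos_vec v" and vw: "\<forall>i. v$i \<le> w$i"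
    and sub: "\<forall>i. mu * v$i \<le> f v $ i" and sup: "\<forall>i. f w $ i \<le> mu * w$i"
  shows "\<exists>y. pos_vec y \<and> (\<forall>i. v$i \<le> y$i \<and> y$i \<le> w$i) \<and> f y = mu *\<^sub>R y"
proof -
  define h where "h z = (1/mu) *\<^sub>R f z" for z
  have hi: "h z $ i = f z $ i / mu" for z i by (simp add: h_def)
  have hmono: "h a $ i \<le> h b $ i" if "nonneg_vec a" "\<forall>i. a$i \<le> b$i" for a b i
    using good_mono[OF g that] mu by (simp add: hi divide_right_mono)
  define A where "A = {z. (\<forall>i. v$i \<le> z$i \<and> z$i \<le> w$i) \<and> (\<forall>i. z$i \<le> h z $ i)}"
  have vA: "v \<in> A" unfolding A_def using vw sub mu by (simp add: hi field_simps)
  have vn: "nonneg_vec v" using pos_nonneg[OF v] .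
  define y where "y = (\<chi> i. Sup ((\<lambda>z. z$i) ` A))"
  have ne: "(\<lambda>z. z$i) ` A \<noteq> {}" for i using vA by blast
  have bdd: "bdd_above ((\<lambda>z. z$i) ` A)" for i
    by (rule bdd_aboveI[of _ "w$i"]) (auto simp: A_def)
  have zy: "z$i \<le> y$i" if "z \<in> A" for z i
    unfolding y_def using cSup_upper[OF _ bdd] that by simp
  have yw: "y$i \<le> w$i" for i
    unfolding y_def by (simp, rule cSup_least[OF ne]) (auto simp: A_def)
  have vy: "v$i \<le> y$i" for i using zy[OF vA] .
  have yn: "nonneg_vec y" using vy vn unfolding nonneg_vec_def by (meson order_trans)
  have znn: "nonneg_vec z" if "z \<in> A" for z
  proof -
    have "\<forall>i. v$i \<le> z$i" using that unfolding A_def by blast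
    then show ?thesis using vn unfolding nonneg_vec_def by (meson order_trans)
  qed
  have yh: "y$i \<le> h y $ i" for i
    unfolding y_def
  proof (simp, rule cSup_least[OF ne])
    fix r assume "r \<in> (\<lambda>z. z$i) ` A"
    then obtain z where z: "z \<in> A" "r = z$i" by blast
    have "z$i \<le> h z $ i" using z(1) unfolding A_def by blast
    also have "h z $ i \<le> h y $ i" by (rule hmono[OF znn[OF z(1)]]) (use zy z in blast)
    finally show "r \<le> h (\<chi> i. Sup ((\<lambda>z. z$i) ` A)) $ i" using z unfolding y_def by simp
  qed
  have hyA: "h y \<in> A" unfolding A_def
  proof (intro CollectI conjI allI)
    fix i
    have "v$i \<le> h v $ i" using sub mu by (simp add: hi field_simps)
    also have "h v $ i \<le> h y $ i" by (rule hmono[OF vn]) (use vy in blast)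
    finally show "v$i \<le> h y $ i" .
    have "h y $ i \<le> h w $ i" by (rule hmono[OF yn]) (use yw in blast)
    also have "h w $ i \<le> w$i" using sup mu by (simp add: hi field_simps)
    finally show "h y $ i \<le> w$i" .
    show "h y $ i \<le> h (h y) $ i" by (rule hmono[OF yn]) (use yh in blast)
  qed
  have "y$i = h y $ i" for i using zy[OF hyA] yh by (meson order_antisym)
  then have "f y = mu *\<^sub>R y" using mu by (simp add: vec_eq_iff hi field_simps)
  moreover have "pos_vec y" using v vy unfolding pos_vec_def by (meson order_less_le_trans)
  ultimately show ?thesis using vy yw by blast
qed

lemma eigval_eq:
  assumes g: "good f D" and x: "pos_vec x" "f x = a *\<^sub>R x" and y: "pos_vec y" "f y = b *\<^sub>R y"
  shows "a = b"
  using cone_r_eig[OF g x] cone_r_eig[OF g y] by simp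

lemma min_ratio_closed:
  fixes f :: "real^'n \<Rightarrow> real^'n"
  assumes g: "good f D" and x: "pos_vec x" "f x = mu *\<^sub>R x" and y: "pos_vec y" "f y = mu *\<^sub>R y"
    and t: "t > 0" "\<forall>i. t * x$i \<le> y$i"
  shows "closedG f {i. y$i = t * x$i}"
  unfolding closedG_def
proof (intro allI impI)
  fix i j assume ij: "i \<in> {i. y$i = t * x$i} \<and> arc f i j"
  show "j \<in> {i. y$i = t * x$i}"
  proof (rule ccontr)
    assume "j \<notin> {i. y$i = t * x$i}"
    then have lt: "(t *\<^sub>R x) $ j < y $ j" using t(2) by (simp add: order.not_eq_order_implies_strict)
    have jD: "j \<in> D i" using ij arc_iff[OF g] by blast
    have "f (t *\<^sub>R x) $ i < f y $ i"
      by (rule good_strict[OF g jD nonneg_scale[OF pos_nonneg[OF x(1)]] y(1)]) (use t lt in auto)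
    then have "t * (mu * x$i) < mu * y$i" using good_homog_i[OF g pos_nonneg[OF x(1)] t(1)] x y by simp
    then show False using ij by (simp add: algebra_simps)
  qed
qed

lemma max_ratio_closed:
  fixes f :: "real^'n \<Rightarrow> real^'n"
  assumes g: "good f D" and x: "pos_vec x" "f x = mu *\<^sub>R x" and y: "pos_vec y" "f y = mu *\<^sub>R y"
    and t: "t > 0" "\<forall>i. y$i \<le> t * x$i"
  shows "closedG f {i. y$i = t * x$i}"
  unfolding closedG_def
proof (intro allI impI)
  fix i j assume ij: "i \<in> {i. y$i = t * x$i} \<and> arc f i j"
  show "j \<in> {i. y$i = t * x$i}"
  proof (rule ccontr)
    assume "j \<notin> {i. y$i = t * x$i}"
    then have lt: "y $ j < (t *\<^sub>R x) $ j" using t(2) by (simp add: order.not_eq_order_implies_strict)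
    have jD: "j \<in> D i" using ij arc_iff[OF g] by blast
    have tx: "pos_vec (t *\<^sub>R x)" using x(1) t(1) by (simp add: pos_vec_def)
    have "f y $ i < f (t *\<^sub>R x) $ i"
      by (rule good_strict[OF g jD pos_nonneg[OF y(1)] tx]) (use t lt in auto)
    then have "mu * y$i < t * (mu * x$i)" using good_homog_i[OF g pos_nonneg[OF x(1)] t(1)] x y by simp
    then show False using ij by (simp add: algebra_simps)
  qed
qed

theorem uniq_if:
  fixes f :: "real^'n \<Rightarrow> real^'n"
  assumes g: "good f D" and ex1: "\<exists>!C. final_class f C"
    and ex: "pos_eigvec f x" "pos_eigvec f y"
  shows "\<exists>c. y = c *\<^sub>R x"
proof -
  obtain a where x: "pos_vec x" "f x = a *\<^sub>R x" using ex(1) unfolding pos_eigvec_def by blast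
  obtain b where y: "pos_vec y" "f y = b *\<^sub>R y" using ex(2) unfolding pos_eigvec_def by blast
  have ab: "a = b" by (rule eigval_eq[OF g x y])
  define t where "t = Min (range (\<lambda>i. y$i / x$i))"
  define T where "T = Max (range (\<lambda>i. y$i / x$i))"
  have xp: "x$i > 0" for i using x(1) by (simp add: pos_vec_def)
  have yp: "y$i > 0" for i using y(1) by (simp add: pos_vec_def)
  have tle: "t \<le> y$i / x$i" for i unfolding t_def by (rule Min_le) auto
  have Tge: "y$i / x$i \<le> T" for i unfolding T_def by (rule Max_ge) auto
  obtain i1 where i1: "t = y$i1 / x$i1"
  proof -
    have "t \<in> range (\<lambda>i. y$i / x$i)" unfolding t_def by (rule Min_in) auto
    then show ?thesis using that by blast
  qed
  obtain i2 where i2: "T = y$i2 / x$i2"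
  proof -
    have "T \<in> range (\<lambda>i. y$i / x$i)" unfolding T_def by (rule Max_in) auto
    then show ?thesis using that by blast
  qed
  have tpos: "t > 0" using i1 xp yp by simp
  have Tpos: "T > 0" using i2 xp yp by simp
  have t1: "\<forall>i. t * x$i \<le> y$i" using tle xp by (simp add: field_simps)
  have T1: "\<forall>i. y$i \<le> T * x$i" using Tge xp by (simp add: field_simps)
  have y': "f y = a *\<^sub>R y" using y ab by simp
  have c1: "closedG f {i. y$i = t * x$i}" by (rule min_ratio_closed[OF g x y(1) y' tpos t1])
  have c2: "closedG f {i. y$i = T * x$i}" by (rule max_ratio_closed[OF g x y(1) y' Tpos T1])
  have "y$i1 = t * x$i1" using i1 xp[of i1] by (simp add: field_simps)
  then have ne1: "{i. y$i = t * x$i} \<noteq> {}" by blast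
  have "y$i2 = T * x$i2" using i2 xp[of i2] by (simp add: field_simps)
  then have ne2: "{i. y$i = T * x$i} \<noteq> {}" by blast
  obtain C1 where C1: "final_class f C1" "C1 \<subseteq> {i. y$i = t * x$i}" using closed_contains_final[OF c1 ne1] by blast
  obtain C2 where C2: "final_class f C2" "C2 \<subseteq> {i. y$i = T * x$i}" using closed_contains_final[OF c2 ne2] by blast
  have "C1 = C2" using ex1 C1(1) C2(1) by blast
  moreover obtain k where "k \<in> C1" using C1(1) scc_nonempty unfolding final_class_def by blast
  ultimately have "t * x$k = T * x$k" using C1(2) C2(2) by (metis (mono_tags, lifting) mem_Collect_eq subsetD)
  then have tT: "t = T" using xp[of k] by simp
  have "y$i = t * x$i" for i using t1 T1 tT by (meson order_antisym)
  then have "y = t *\<^sub>R x" by (simp add: vec_eq_iff)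
  then show ?thesis by blast
qed

theorem uniq_only_if:
  fixes f :: "real^'n \<Rightarrow> real^'n"
  assumes g: "good f D" and ex: "pos_eigvec f x"
    and u: "\<forall>x y. pos_eigvec f x \<and> pos_eigvec f y \<longrightarrow> (\<exists>c. y = c *\<^sub>R x)"
  shows "\<exists>!C. final_class f C"
proof -
  obtain mu where x: "pos_vec x" "f x = mu *\<^sub>R x" using ex unfolding pos_eigvec_def by blast
  have xp: "x$i > 0" for i using x(1) by (simp add: pos_vec_def)
  have mupos: "mu > 0"
  proof -
    obtain i :: 'n where True by simp
    have "f x $ i > 0" using good_pos[OF g x(1)] by (simp add: pos_vec_def)
    then show ?thesis using x(2) xp[of i] by (simp add: zero_less_mult_iff)
  qed
  obtain C0 where C0: "final_class f C0"
    using closed_contains_final[of f UNIV] unfolding closedG_def by blast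
  have "C1 = C2" if C1: "final_class f C1" and C2: "final_class f C2" for C1 C2
  proof (rule ccontr)
    assume ne: "C1 \<noteq> C2"
    have dis: "C1 \<inter> C2 = {}" using scc_disjoint ne C1 C2 unfolding final_class_def by blast
    define v where "v = (\<chi> i. if i \<in> C2 then 2 * x$i else x$i)"
    define w where "w = (\<chi> i. if i \<in> C1 then x$i else 2 * x$i)"
    have xn: "nonneg_vec x" using pos_nonneg[OF x(1)] .
    have x2n: "nonneg_vec ((2::real) *\<^sub>R x)" using nonneg_scale[OF xn, of 2] by simp
    have vpos: "pos_vec v" using xp by (simp add: v_def pos_vec_def)
    have wpos: "pos_vec w" using xp by (simp add: w_def pos_vec_def)
    have vw: "\<forall>i. v$i \<le> w$i" using dis xp by (auto simp: v_def w_def less_imp_le)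
    have sub: "\<forall>i. mu * v$i \<le> f v $ i"
    proof
      fix i show "mu * v$i \<le> f v $ i"
      proof (cases "i \<in> C2")
        case True
        then have "D i \<subseteq> C2" using closed_of_final[OF g C2] by blast
        then have "f v $ i = f ((2::real) *\<^sub>R x) $ i"
          by (intro good_indep[OF g pos_nonneg[OF vpos] x2n]) (auto simp: v_def)
        also have "\<dots> = 2 * (mu * x$i)" using good_homog_i[OF g xn, of 2 i] x(2) by simp
        finally show ?thesis using True by (simp add: v_def)
      next
        case False
        have "f x $ i \<le> f v $ i" by (rule good_mono[OF g xn]) (use xp in \<open>auto simp: v_def less_imp_le\<close>)
        then show ?thesis using False x(2) by (simp add: v_def)
      qed
    qed
    have sup: "\<forall>i. f w $ i \<le> mu * w$i"
    proof
      fix i show "f w $ i \<le> mu * w$i"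
      proof (cases "i \<in> C1")
        case True
        then have "D i \<subseteq> C1" using closed_of_final[OF g C1] by blast
        then have "f w $ i = f x $ i"
          by (intro good_indep[OF g pos_nonneg[OF wpos] xn]) (auto simp: w_def)
        then show ?thesis using True x(2) by (simp add: w_def)
      next
        case False
        have "f w $ i \<le> f ((2::real) *\<^sub>R x) $ i"
          by (rule good_mono[OF g pos_nonneg[OF wpos]]) (use xp in \<open>auto simp: w_def less_imp_le\<close>)
        also have "\<dots> = 2 * (mu * x$i)" using good_homog_i[OF g xn, of 2 i] x(2) by simp
        finally show ?thesis using False by (simp add: w_def)
      qed
    qed
    obtain y where y: "pos_vec y" "\<forall>i. v$i \<le> y$i \<and> y$i \<le> w$i" "f y = mu *\<^sub>R y"
      using tarski_eig[OF g mupos vpos vw sub sup] by blast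
    have "pos_eigvec f y" using y unfolding pos_eigvec_def by blast
    then obtain c where c: "y = c *\<^sub>R x" using u ex by blast
    obtain k1 where k1: "k1 \<in> C1" using C1 scc_nonempty unfolding final_class_def by blast
    obtain k2 where k2: "k2 \<in> C2" using C2 scc_nonempty unfolding final_class_def by blast
    have "k1 \<notin> C2" using k1 dis by blast
    then have "y$k1 = x$k1" using y(2)[rule_format, of k1] k1 by (auto simp: v_def w_def)
    then have "c = 1" using c xp[of k1] by simp
    moreover have "k2 \<notin> C1" using k2 dis by blast
    then have "y$k2 = 2 * x$k2" using y(2)[rule_format, of k2] k2 by (auto simp: v_def w_def)
    ultimately show False using c xp[of k2] by simp
  qed
  then show ?thesis using C0 by blast
qed

lemma unif2:
  fixes R :: "'p \<Rightarrow> real \<Rightarrow> real \<Rightarrow> bool"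
  assumes "finite P" "\<forall>p\<in>P. \<exists>\<kappa> \<theta>. \<kappa> > 0 \<and> 0 < \<theta> \<and> \<theta> \<le> 1 \<and> R p \<kappa> \<theta>"
    "\<forall>p \<kappa> \<theta> \<kappa>' \<theta>'. p \<in> P \<and> R p \<kappa> \<theta> \<and> 0 < \<kappa>' \<and> \<kappa>' \<le> \<kappa> \<and> 0 < \<theta>' \<and> \<theta>' \<le> \<theta> \<longrightarrow> R p \<kappa>' \<theta>'"
  shows "\<exists>\<kappa> \<theta>. \<kappa> > 0 \<and> 0 < \<theta> \<and> \<theta> \<le> 1 \<and> (\<forall>p\<in>P. R p \<kappa> \<theta>)"
  using assms
proof (induction P rule: finite_induct)
  case empty
  show ?case by (rule exI[of _ 1], rule exI[of _ 1]) simp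
next
  case (insert p P)
  have h1: "\<forall>p\<in>P. \<exists>\<kappa> \<theta>. \<kappa> > 0 \<and> 0 < \<theta> \<and> \<theta> \<le> 1 \<and> R p \<kappa> \<theta>" using insert.prems(1) by simp
  have h2: "\<forall>p \<kappa> \<theta> \<kappa>' \<theta>'. p \<in> P \<and> R p \<kappa> \<theta> \<and> 0 < \<kappa>' \<and> \<kappa>' \<le> \<kappa> \<and> 0 < \<theta>' \<and> \<theta>' \<le> \<theta> \<longrightarrow> R p \<kappa>' \<theta>'"
    using insert.prems(2) by blast
  obtain \<kappa>1 \<theta>1 where 1: "\<kappa>1 > 0" "0 < \<theta>1" "\<theta>1 \<le> 1" "\<forall>p\<in>P. R p \<kappa>1 \<theta>1"
    using insert.IH[OF h1 h2] by blast
  obtain \<kappa>2 \<theta>2 where 2: "\<kappa>2 > 0" "0 < \<theta>2" "\<theta>2 \<le> 1" "R p \<kappa>2 \<theta>2"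
    using insert.prems(1) by blast
  have m: "R q (min \<kappa>1 \<kappa>2) (min \<theta>1 \<theta>2)" if "q \<in> insert p P" "R q k t" "min \<kappa>1 \<kappa>2 \<le> k" "min \<theta>1 \<theta>2 \<le> t" for q k t
    using insert.prems(2) that 1 2 by auto
  show ?case
  proof (rule exI[of _ "min \<kappa>1 \<kappa>2"], rule exI[of _ "min \<theta>1 \<theta>2"], intro conjI ballI)
    show "min \<kappa>1 \<kappa>2 > 0" "0 < min \<theta>1 \<theta>2" "min \<theta>1 \<theta>2 \<le> 1" using 1 2 by auto
    fix q assume q: "q \<in> insert p P"
    show "R q (min \<kappa>1 \<kappa>2) (min \<theta>1 \<theta>2)"
    proof (cases "q = p")
      case True then show ?thesis using m[OF q, of \<kappa>2 \<theta>2] 2 by simp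
    next
      case False then have "q \<in> P" using q by simp
      then show ?thesis using m[OF q, of \<kappa>1 \<theta>1] 1 by simp
    qed
  qed
qed

lemma unif1:
  fixes R :: "'p \<Rightarrow> real \<Rightarrow> bool"
  assumes "finite P" "\<forall>p\<in>P. \<exists>\<rho>. \<rho> \<ge> 1 \<and> R p \<rho>"
    "\<forall>p \<rho> \<rho>'. p \<in> P \<and> R p \<rho> \<and> \<rho> \<le> \<rho>' \<longrightarrow> R p \<rho>'"
  shows "\<exists>\<rho>. \<rho> \<ge> 1 \<and> (\<forall>p\<in>P. R p \<rho>)"
  using assms
proof (induction P rule: finite_induct)
  case empty show ?case by (rule exI[of _ 1]) simp
next
  case (insert p P)
  have h1: "\<forall>p\<in>P. \<exists>\<rho>. \<rho> \<ge> 1 \<and> R p \<rho>" using insert.prems(1) by simp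
  have h2: "\<forall>p \<rho> \<rho>'. p \<in> P \<and> R p \<rho> \<and> \<rho> \<le> \<rho>' \<longrightarrow> R p \<rho>'" using insert.prems(2) by blast
  obtain \<rho>1 where 1: "\<rho>1 \<ge> 1" "\<forall>p\<in>P. R p \<rho>1" using insert.IH[OF h1 h2] by blast
  obtain \<rho>2 where 2: "\<rho>2 \<ge> 1" "R p \<rho>2" using insert.prems(1) by blast
  show ?case
  proof (rule exI[of _ "max \<rho>1 \<rho>2"], intro conjI ballI)
    show "max \<rho>1 \<rho>2 \<ge> 1" using 1 by simp
    fix q assume q: "q \<in> insert p P"
    show "R q (max \<rho>1 \<rho>2)"
    proof (cases "q = p")
      case True then show ?thesis using insert.prems(2) q 2 by (meson max.cobounded2)
    next
      case False then have "q \<in> P" using q by simp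
      then show ?thesis using insert.prems(2) q 1 by (meson max.cobounded1)
    qed
  qed
qed

lemma unif_delta:
  fixes P :: "'p \<Rightarrow> real \<Rightarrow> bool"
  assumes "finite A" "\<forall>a\<in>A. \<exists>d>0. \<forall>\<delta>. 0 < \<delta> \<and> \<delta> \<le> d \<longrightarrow> P a \<delta>"
  shows "\<exists>d>0. \<forall>\<delta>. 0 < \<delta> \<and> \<delta> \<le> d \<longrightarrow> (\<forall>a\<in>A. P a \<delta>)"
  using assms
proof (induction A rule: finite_induct)
  case empty show ?case by (rule exI[of _ 1]) simp
next
  case (insert a A)
  have h1: "\<forall>a\<in>A. \<exists>d>0. \<forall>\<delta>. 0 < \<delta> \<and> \<delta> \<le> d \<longrightarrow> P a \<delta>" using insert.prems by simp
  obtain d1 where 1: "d1 > 0" "\<forall>\<delta>. 0 < \<delta> \<and> \<delta> \<le> d1 \<longrightarrow> (\<forall>a\<in>A. P a \<delta>)" using insert.IH[OF h1] by blast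
  obtain d2 where 2: "d2 > 0" "\<forall>\<delta>. 0 < \<delta> \<and> \<delta> \<le> d2 \<longrightarrow> P a \<delta>" using insert.prems by blast
  show ?case
    by (rule exI[of _ "min d1 d2"]) (use 1 2 in auto)
qed

lemma good_growth_unif:
  fixes f :: "real^'n \<Rightarrow> real^'n"
  assumes g: "good f D"
  shows "\<exists>\<kappa> \<theta>. \<kappa> > 0 \<and> 0 < \<theta> \<and> \<theta> \<le> 1 \<and> (\<forall>i. \<forall>j\<in>D i. \<forall>x m. nonneg_vec x \<and> m > 0 \<and>
      (\<forall>k\<in>D i. m \<le> x$k) \<longrightarrow> \<kappa> * m * (x$j / m) powr \<theta> \<le> f x $ i)"
proof -
  let ?P = "{(i, j). j \<in> D i}"
  let ?R = "\<lambda>(i, j) \<kappa> \<theta>. \<forall>x m. nonneg_vec x \<and> m > 0 \<and> (\<forall>k\<in>D i. m \<le> x$k) \<longrightarrow> \<kappa> * m * (x$j / m) powr \<theta> \<le> f x $ i"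
  have "\<exists>\<kappa> \<theta>. \<kappa> > 0 \<and> 0 < \<theta> \<and> \<theta> \<le> 1 \<and> (\<forall>p\<in>?P. ?R p \<kappa> \<theta>)"
  proof (rule unif2)
    show "finite ?P" by simp
    show "\<forall>p\<in>?P. \<exists>\<kappa> \<theta>. \<kappa> > 0 \<and> 0 < \<theta> \<and> \<theta> \<le> 1 \<and> ?R p \<kappa> \<theta>"
      using good_growth[OF g] by auto
    show "\<forall>p \<kappa> \<theta> \<kappa>' \<theta>'. p \<in> ?P \<and> ?R p \<kappa> \<theta> \<and> 0 < \<kappa>' \<and> \<kappa>' \<le> \<kappa> \<and> 0 < \<theta>' \<and> \<theta>' \<le> \<theta> \<longrightarrow> ?R p \<kappa>' \<theta>'"
    proof (intro allI impI, elim conjE)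
    fix p \<kappa> \<theta> \<kappa>' \<theta>' assume h: "p \<in> ?P" "?R p \<kappa> \<theta>" "0 < \<kappa>'" "\<kappa>' \<le> \<kappa>" "0 < \<theta>'" "\<theta>' \<le> \<theta>"
    obtain i j where p: "p = (i, j)" "j \<in> D i" using h(1) by blast
    show "?R p \<kappa>' \<theta>'" unfolding p(1) split
    proof (intro allI impI)
      fix x m assume a: "nonneg_vec x \<and> m > 0 \<and> (\<forall>k\<in>D i. m \<le> x$k)"
      have X: "x$j / m \<ge> 1" using a p(2) by simp
      have "\<kappa>' * m * (x$j / m) powr \<theta>' \<le> \<kappa> * m * (x$j / m) powr \<theta>"
      proof (rule mult_mono)
        show "\<kappa>' * m \<le> \<kappa> * m" using h a by simp
        show "(x$j / m) powr \<theta>' \<le> (x$j / m) powr \<theta>" using X h by (simp add: powr_mono)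
        show "0 \<le> \<kappa> * m" using h a by simp
      qed simp
      also have "\<dots> \<le> f x $ i" using h(2) a unfolding p(1) split by blast
      finally show "\<kappa>' * m * (x$j / m) powr \<theta>' \<le> f x $ i" .
    qed
    qed
  qed
  then obtain \<kappa> \<theta> where "\<kappa> > 0" "0 < \<theta>" "\<theta> \<le> 1" "\<forall>p\<in>?P. ?R p \<kappa> \<theta>" by blast
  then show ?thesis by (intro exI[of _ \<kappa>] exI[of _ \<theta>]) auto
qed

lemma powr_inv_bound:
  fixes X Y \<theta> :: real
  assumes "X \<ge> 0" "\<theta> > 0" "X powr \<theta> \<le> Y"
  shows "X \<le> Y powr (1/\<theta>)"
proof -
  have "X = (X powr \<theta>) powr (1/\<theta>)" using assms by (simp add: powr_powr)
  also have "\<dots> \<le> Y powr (1/\<theta>)" by (rule powr_mono2) (use assms in auto)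
  finally show ?thesis .
qed

lemma hilbert_bound:
  fixes f :: "real^'n \<Rightarrow> real^'n"
  assumes g: "good f D" and cl: "\<forall>i\<in>C. D i \<subseteq> C" and sc: "\<forall>i\<in>C. \<forall>j\<in>C. reach f i j" and B: "B > 0"
  shows "\<exists>R\<ge>1. \<forall>z. pos_vec z \<and> (\<forall>i\<in>C. f z $ i \<le> B * z$i) \<longrightarrow> (\<forall>i\<in>C. \<forall>j\<in>C. z$j \<le> R * z$i)"
proof -
  obtain \<kappa> \<theta> where k: "\<kappa> > 0" "0 < \<theta>" "\<theta> \<le> 1" "\<forall>i. \<forall>j\<in>D i. \<forall>x m. nonneg_vec x \<and> m > 0 \<and>
      (\<forall>k\<in>D i. m \<le> x$k) \<longrightarrow> \<kappa> * m * (x$j / m) powr \<theta> \<le> f x $ i"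
    using good_growth_unif[OF g] by blast
  have clC: "closedG f C" unfolding closedG_def using cl arc_iff[OF g] by blast
  define Q where "Q z k \<longleftrightarrow> pos_vec z \<and> (\<forall>i\<in>C. f z $ i \<le> B * z$i) \<and> (\<forall>i\<in>C. z$k \<le> z$i)" for z k
  have path: "\<exists>\<rho>\<ge>1. \<forall>z. Q z k \<longrightarrow> z$j \<le> \<rho> * z$k" if kC: "k \<in> C" and r: "reach f k j" for k j
  proof -
    have "(k, j) \<in> {(a, b). arc f a b}\<^sup>*" using r by (simp add: reach_def)
    then show ?thesis
    proof (induction rule: rtrancl_induct)
      case base then show ?case by (intro exI[of _ 1]) auto
    next
      case (step y y')
      obtain \<rho> where \<rho>: "\<rho> \<ge> 1" "\<forall>z. Q z k \<longrightarrow> z$y \<le> \<rho> * z$k" using step.IH by blast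
      have yC: "y \<in> C" using closedG_reach[OF clC kC] step.hyps(1) by (simp add: reach_def)
      have y'D: "y' \<in> D y" using step.hyps(2) arc_iff[OF g] by blast
      define \<rho>' where "\<rho>' = max 1 ((B * \<rho> / \<kappa>) powr (1/\<theta>))"
      show ?case
      proof (intro exI conjI allI impI)
        show "\<rho>' \<ge> 1" unfolding \<rho>'_def by simp
        fix z assume z: "Q z k"
        have zp: "pos_vec z" and zsub: "\<forall>i\<in>C. f z $ i \<le> B * z$i" and zmin: "\<forall>i\<in>C. z$k \<le> z$i"
          using z unfolding Q_def by auto
        have mk: "z$k > 0" using zp by (simp add: pos_vec_def)
        have lb: "\<forall>l\<in>D y. z$k \<le> z$l" using zmin cl yC by blast
        have G: "\<kappa> * z$k * (z$y' / z$k) powr \<theta> \<le> f z $ y"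
          using k(4) y'D pos_nonneg[OF zp] mk lb by blast
        also have "\<dots> \<le> B * z$y" using zsub yC by blast
        also have "\<dots> \<le> B * (\<rho> * z$k)" using \<rho>(2) z B by simp
        finally have "\<kappa> * z$k * (z$y' / z$k) powr \<theta> \<le> B * \<rho> * z$k" by simp
        then have "(z$y' / z$k) powr \<theta> \<le> B * \<rho> / \<kappa>" using k(1) mk by (simp add: field_simps)
        then have "z$y' / z$k \<le> (B * \<rho> / \<kappa>) powr (1/\<theta>)"
          by (rule powr_inv_bound[rotated 2]) (use zp k in \<open>auto simp: pos_vec_def less_imp_le\<close>)
        then have "z$y' / z$k \<le> \<rho>'" unfolding \<rho>'_def by simp
        then show "z$y' \<le> \<rho>' * z$k" using mk by (simp add: field_simps)
      qed
    qed
  qed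
  have "\<exists>\<rho>. \<rho> \<ge> 1 \<and> (\<forall>p\<in>C \<times> C. (\<lambda>(k, j) \<rho>. \<forall>z. Q z k \<longrightarrow> z$j \<le> \<rho> * z$k) p \<rho>)"
  proof (rule unif1)
    show "finite (C \<times> C)" by simp
    show "\<forall>p\<in>C \<times> C. \<exists>\<rho>. \<rho> \<ge> 1 \<and> (\<lambda>(k, j) \<rho>. \<forall>z. Q z k \<longrightarrow> z$j \<le> \<rho> * z$k) p \<rho>"
      using path sc by auto
    show "\<forall>p \<rho> \<rho>'. p \<in> C \<times> C \<and> (\<lambda>(k, j) \<rho>. \<forall>z. Q z k \<longrightarrow> z$j \<le> \<rho> * z$k) p \<rho> \<and> \<rho> \<le> \<rho>' \<longrightarrow> (\<lambda>(k, j) \<rho>. \<forall>z. Q z k \<longrightarrow> z$j \<le> \<rho> * z$k) p \<rho>'"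
    proof (intro allI impI, elim conjE)
    fix p \<rho> \<rho>' assume h: "p \<in> C \<times> C" "(\<lambda>(k, j) \<rho>. \<forall>z. Q z k \<longrightarrow> z$j \<le> \<rho> * z$k) p \<rho>" "\<rho> \<le> \<rho>'"
    obtain k j where p: "p = (k, j)" by (cases p)
    show "(\<lambda>(k, j) \<rho>. \<forall>z. Q z k \<longrightarrow> z$j \<le> \<rho> * z$k) p \<rho>'"
      unfolding p split
    proof (intro allI impI)
      fix z assume "Q z k"
      then have "z$j \<le> \<rho> * z$k" "z$k > 0" using h(2) unfolding p split Q_def pos_vec_def by auto
      then show "z$j \<le> \<rho>' * z$k" using h(3) by (smt (verit) mult_right_mono)
    qed
    qed
  qed
  then obtain R where R: "R \<ge> 1" "\<forall>k\<in>C. \<forall>j\<in>C. \<forall>z. Q z k \<longrightarrow> z$j \<le> R * z$k" by auto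
  show ?thesis
  proof (intro exI conjI allI impI ballI)
    show "R \<ge> 1" by (rule R(1))
    fix z i j assume z: "pos_vec z \<and> (\<forall>i\<in>C. f z $ i \<le> B * z$i)" and ij: "i \<in> C" "j \<in> C"
    define k where "k = arg_min_on (\<lambda>i. z$i) C"
    have ne: "C \<noteq> {}" using ij by auto
    have kC: "k \<in> C" and kmin: "\<forall>i\<in>C. z$k \<le> z$i"
      unfolding k_def using arg_min_if_finite[OF _ ne, of "\<lambda>i. z$i"]
      by (auto simp: not_less)
    have "Q z k" unfolding Q_def using z kmin by blast
    then have "z$j \<le> R * z$k" using R(2) kC ij by blast
    also have "\<dots> \<le> R * z$i" using kmin ij R(1) by simp
    finally show "z$j \<le> R * z$i" .
  qed
qed

lemma final_sc:
  assumes "final_class f C" "i \<in> C" "j \<in> C" shows "reach f i j"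
proof -
  have "scc f C" using assms(1) unfolding final_class_def by blast
  then have "C = {k. reach f i k \<and> reach f k i}" using scc_member assms(2) by blast
  then show ?thesis using assms(3) by blast
qed

lemma cone_r_restr_nonneg:
  fixes f :: "real^'n \<Rightarrow> real^'n"
  assumes g: "good f D" shows "0 \<le> cone_r (restr0 f C)"
proof (rule cone_r_ge)
  fix y :: "real^'n" assume y: "pos_vec y"
  obtain i :: 'n where True by simp
  have "0 \<le> restr0 f C y $ i / y $ i"
    using restr0_nonneg[OF g pos_nonneg[OF y], of C] y by (simp add: nonneg_vec_def pos_vec_def less_imp_le)
  then show "0 \<le> ratio (restr0 f C) y" using ratio_ge order_trans by blast
qed

lemma final_eig:
  fixes f :: "real^'n \<Rightarrow> real^'n"
  assumes g: "good f D" and C: "final_class f C"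
  shows "\<exists>u. pos_vec u \<and> (\<forall>i\<in>C. f u $ i = cone_r (restr0 f C) * u$i)"
proof -
  define lam where "lam = cone_r (restr0 f C)"
  have cl: "\<forall>i\<in>C. D i \<subseteq> C" using closed_of_final[OF g C] by blast
  have sc: "\<forall>i\<in>C. \<forall>j\<in>C. reach f i j" using final_sc[OF C] by blast
  have Cne: "C \<noteq> {}" using C scc_nonempty unfolding final_class_def by blast
  have lam0: "lam \<ge> 0" unfolding lam_def by (rule cone_r_restr_nonneg[OF g])
  define B where "B = lam + 1"
  have Bp: "B > 0" using lam0 by (simp add: B_def)
  obtain R where R: "R \<ge> 1" "\<forall>z. pos_vec z \<and> (\<forall>i\<in>C. f z $ i \<le> B * z$i) \<longrightarrow> (\<forall>i\<in>C. \<forall>j\<in>C. z$j \<le> R * z$i)"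
    using hilbert_bound[OF g cl sc Bp] by blast
  have "\<forall>n. \<exists>y. pos_vec y \<and> ratio (restr0 f C) y < lam + inverse (real (Suc n))"
    using cone_r_less[of "restr0 f C"] unfolding lam_def by simp
  then obtain Y where Y: "\<forall>n. pos_vec (Y n) \<and> ratio (restr0 f C) (Y n) < lam + inverse (real (Suc n))"
    using choice[of "\<lambda>n y. pos_vec y \<and> ratio (restr0 f C) y < lam + inverse (real (Suc n))"] by blast
  define s where "s n = (\<Sum>i\<in>C. Y n $ i)" for n
  have spos: "s n > 0" for n unfolding s_def
    by (rule sum_pos) (use Cne Y in \<open>auto simp: pos_vec_def\<close>)
  define z where "z n = (\<chi> i. if i \<in> C then Y n $ i / s n else 1)" for n
  have zpos: "pos_vec (z n)" for n using Y spos by (simp add: z_def pos_vec_def)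
  have zsum: "(\<Sum>i\<in>C. z n $ i) = 1" for n
  proof -
    have "(\<Sum>i\<in>C. z n $ i) = (\<Sum>i\<in>C. Y n $ i / s n)" by (simp add: z_def)
    also have "\<dots> = (\<Sum>i\<in>C. Y n $ i) / s n" by (rule sum_divide_distrib[symmetric])
    also have "\<dots> = 1" using spos[of n] unfolding s_def by simp
    finally show ?thesis .
  qed
  have zkey: "f (z n) $ i < (lam + inverse (real (Suc n))) * z n $ i" if i: "i \<in> C" for n i
  proof -
    have Yn: "nonneg_vec (Y n)" using Y pos_nonneg by blast
    have sp: "1 / s n > 0" using spos[of n] by simp
    have pn: "nonneg_vec ((1 / s n) *\<^sub>R proj0 C (Y n))"
      using nonneg_scale[OF proj0_nonneg[OF Yn], of "1 / s n" C] sp by simp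
    have "f (z n) $ i = f ((1 / s n) *\<^sub>R proj0 C (Y n)) $ i"
      by (rule good_indep[OF g pos_nonneg[OF zpos] pn]) (use cl i in \<open>auto simp: z_def proj0_def\<close>)
    also have "\<dots> = (1 / s n) * f (proj0 C (Y n)) $ i"
      by (rule good_homog_i[OF g proj0_nonneg[OF Yn] sp])
    finally have e: "f (z n) $ i = f (proj0 C (Y n)) $ i / s n" by simp
    have "restr0 f C (Y n) $ i / Y n $ i < lam + inverse (real (Suc n))"
      using ratio_ge[of "restr0 f C" "Y n" i] Y by (meson order_le_less_trans)
    then have "f (proj0 C (Y n)) $ i < (lam + inverse (real (Suc n))) * Y n $ i"
      using Y i by (simp add: restr0_nth pos_vec_def divide_less_eq)
    then have "f (proj0 C (Y n)) $ i / s n < (lam + inverse (real (Suc n))) * Y n $ i / s n"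
      using spos[of n] by (simp add: divide_strict_right_mono)
    then show ?thesis using e i by (simp add: z_def)
  qed
  have zB: "\<forall>i\<in>C. f (z n) $ i \<le> B * z n $ i" for n
  proof
    fix i assume i: "i \<in> C"
    have "inverse (real (Suc n)) \<le> 1" by (simp add: inverse_le_1_iff)
    then have "(lam + inverse (real (Suc n))) * z n $ i \<le> B * z n $ i"
      using zpos[of n] unfolding B_def by (intro mult_right_mono) (auto simp: pos_vec_def less_imp_le)
    then show "f (z n) $ i \<le> B * z n $ i" using zkey[OF i, of n] by simp
  qed
  define a where "a = (\<chi> i. if i \<in> C then 1 / (real (card C) * R) else (1::real))"
  have cardp: "real (card C) > 0" using Cne by (simp add: card_gt_0_iff)
  have zK: "z n \<in> cbox a vone" for n
    unfolding mem_box_cart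
  proof
    fix i
    show "a $ i \<le> z n $ i \<and> z n $ i \<le> vone $ i"
    proof (cases "i \<in> C")
      case False then show ?thesis by (simp add: a_def z_def vone_def)
    next
      case True
      have rb: "\<forall>j\<in>C. z n $ j \<le> R * z n $ i" using R(2) zpos zB True by blast
      have "1 = (\<Sum>j\<in>C. z n $ j)" using zsum by simp
      also have "\<dots> \<le> (\<Sum>j\<in>C. R * z n $ i)" by (rule sum_mono) (use rb in blast)
      also have "\<dots> = real (card C) * R * z n $ i" by simp
      finally have lo: "1 \<le> real (card C) * R * z n $ i" .
      then have "1 / (real (card C) * R) \<le> z n $ i" using cardp R(1)
        by (simp add: field_simps)
      moreover have "z n $ i \<le> 1"
      proof -
        have "z n $ i \<le> (\<Sum>j\<in>C. z n $ j)"
          by (rule member_le_sum) (use True zpos in \<open>auto simp: pos_vec_def less_imp_le\<close>)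
        then show ?thesis using zsum by simp
      qed
      ultimately show ?thesis using True by (simp add: a_def vone_def)
    qed
  qed
  obtain u r where u: "u \<in> cbox a vone" "strict_mono r" "(z \<circ> r) \<longlonglongrightarrow> u"
    using compact_cbox[of a vone] zK unfolding compact_def by metis
  have upos: "pos_vec u"
    unfolding pos_vec_def
  proof
    fix i
    have "a $ i \<le> u $ i" using u(1) unfolding mem_box_cart by blast
    moreover have "a $ i > 0" using cardp R(1) by (simp add: a_def)
    ultimately show "u $ i > 0" by simp
  qed
  have ule: "f u $ i \<le> lam * u $ i" if i: "i \<in> C" for i
  proof -
    have lim1: "(\<lambda>n. f (z (r n))) \<longlonglongrightarrow> f u"
    proof (rule continuous_on_tendsto_compose[OF good_cont[OF g]])
      show "(\<lambda>n. z (r n)) \<longlonglongrightarrow> u" using u(3) by (simp add: o_def)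
      show "u \<in> {x. nonneg_vec x}" using pos_nonneg[OF upos] by simp
      show "\<forall>\<^sub>F n in sequentially. z (r n) \<in> {x. nonneg_vec x}" by (rule always_eventually) (use zpos pos_nonneg in blast)
    qed
    have F: "(\<lambda>n. f (z (r n)) $ i) \<longlonglongrightarrow> f u $ i" by (rule tendsto_vec_nth[OF lim1])
    have inv: "(\<lambda>n. inverse (real (Suc (r n)))) \<longlonglongrightarrow> 0"
      using LIMSEQ_subseq_LIMSEQ[OF LIMSEQ_inverse_real_of_nat u(2)] by (simp add: o_def)
    have zi: "(\<lambda>n. z (r n) $ i) \<longlonglongrightarrow> u $ i"
      using tendsto_vec_nth[OF u(3)] by (simp add: o_def)
    have G: "(\<lambda>n. (lam + inverse (real (Suc (r n)))) * z (r n) $ i) \<longlonglongrightarrow> (lam + 0) * u $ i"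
      by (intro tendsto_mult tendsto_add tendsto_const inv zi)
    show ?thesis
      by (rule LIMSEQ_le[OF F]) (use G zkey[OF i] in \<open>auto intro: less_imp_le\<close>)
  qed
  have "\<forall>i\<in>C. f u $ i = lam * u $ i"
  proof (rule ccontr)
    assume "\<not> (\<forall>i\<in>C. f u $ i = lam * u $ i)"
    then obtain k0 where k0: "k0 \<in> C" "f u $ k0 < lam * u $ k0" using ule by force
    have "cone_r (restr0 f C) < lam"
    proof (rule strict_lemma[OF g upos Cne])
      show "\<forall>k\<in>C. f u $ k \<le> lam * u$k" using ule by blast
    next
      fix T assume T: "T \<subseteq> C" "T \<noteq> C"
      show "\<exists>k\<in>C-T. f u $ k < lam * u$k \<or> (\<exists>j\<in>D k. j \<in> T \<or> j \<notin> C)"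
      proof (cases "k0 \<in> T")
        case False then show ?thesis using k0 by blast
      next
        case True
        obtain i0 where i0: "i0 \<in> C" "i0 \<notin> T" using T by blast
        have "reach f i0 k0" using sc i0 k0 by blast
        then obtain c d where cd: "c \<in> C - T" "d \<notin> C - T" "arc f c d"
          using path_exit[of f i0 k0 "C - T"] i0 True by blast
        have "d \<in> D c" using cd(3) arc_iff[OF g] by blast
        then show ?thesis using cd by blast
      qed
    qed
    then show False unfolding lam_def by simp
  qed
  then show ?thesis using upos unfolding lam_def by blast
qed

lemma alg_I1:
  fixes \<kappa> \<delta> vj \<theta> :: real
  assumes "\<delta> > 0" "vj > 0"
  shows "\<kappa> * \<delta> * (vj / \<delta>) powr \<theta> = \<kappa> * vj powr \<theta> * \<delta> powr (1 - \<theta>)"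
  using assms by (simp add: powr_divide powr_diff field_simps)

lemma alg_I2:
  fixes \<kappa> \<delta> qj \<theta> :: real
  assumes "\<delta> > 0"
  shows "\<kappa> * \<delta> * (\<delta> powr (1 - qj) / \<delta>) powr \<theta> = \<kappa> * \<delta> powr (1 - \<theta> * qj)"
proof -
  have "\<delta> powr (1 - qj) / \<delta> = \<delta> powr (- qj)"
    using assms by (simp add: powr_diff powr_minus field_simps)
  then have "(\<delta> powr (1 - qj) / \<delta>) powr \<theta> = \<delta> powr (- qj * \<theta>)" by (simp add: powr_powr)
  moreover have "\<delta> * \<delta> powr (- qj * \<theta>) = \<delta> powr (1 - \<theta> * qj)"
  proof -
    have "\<delta> powr (1 - \<theta> * qj) = \<delta> powr 1 * \<delta> powr (- qj * \<theta>)"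
      by (subst powr_add[symmetric]) (simp add: algebra_simps)
    then show ?thesis using assms by simp
  qed
  ultimately show ?thesis by (simp add: mult.assoc)
qed

lemma alg_small:
  fixes \<mu> c \<delta> e A :: real
  assumes "\<delta> > 0" "e > 0" "\<mu> > 0" "c > 0" "\<delta> \<le> (c / \<mu>) powr (1/e)"
  shows "\<mu> * \<delta> powr (A + e) \<le> c * \<delta> powr A"
proof -
  have "\<delta> powr e \<le> ((c / \<mu>) powr (1/e)) powr e" by (rule powr_mono2) (use assms in auto)
  also have "\<dots> = c / \<mu>" using assms by (simp add: powr_powr)
  finally have "\<mu> * \<delta> powr e \<le> c" using assms by (simp add: field_simps)
  then have "\<mu> * \<delta> powr e * \<delta> powr A \<le> c * \<delta> powr A" by (rule mult_right_mono) simp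
  then show ?thesis by (simp add: powr_add algebra_simps)
qed

definition Qsol :: "(real^'n \<Rightarrow> real^'n) \<Rightarrow> real \<Rightarrow> 'n set \<Rightarrow> bool" where
  "Qsol f mu S \<longleftrightarrow> (\<exists>v w. pos_vec v \<and> pos_vec w \<and> (\<forall>i. v$i \<le> w$i) \<and>
     (\<forall>i\<in>S. mu * v$i \<le> f v $ i \<and> f w $ i \<le> mu * w$i))"

lemma expansion_nonfinal:
  fixes f :: "real^'n \<Rightarrow> real^'n"
  assumes g: "good f D" and C: "scc f C" "\<not> final_class f C" and T: "T \<subseteq> C" "T \<noteq> C"
  shows "\<exists>k\<in>C-T. \<exists>j\<in>D k. j \<in> T \<or> j \<notin> C"
proof -
  obtain i0 where i0: "i0 \<in> C" "i0 \<notin> T" using T by blast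
  have Ci0: "C = {k. reach f i0 k \<and> reach f k i0}" using scc_member[OF C(1) i0(1)] .
  obtain b where b: "reach f i0 b" "b \<notin> C - T"
  proof (cases "T = {}")
    case False
    then obtain j0 where "j0 \<in> T" by blast
    then have "reach f i0 j0" "j0 \<notin> C - T" using T Ci0 by auto
    then show ?thesis using that by blast
  next
    case True
    obtain i1 j1 where "i1 \<in> C" "arc f i1 j1" "j1 \<notin> C"
      using C unfolding final_class_def by blast
    then have "reach f i0 j1" "j1 \<notin> C - T" using Ci0 reach_arc_trans by blast+
    then show ?thesis using that by blast
  qed
  obtain c d where cd: "c \<in> C - T" "d \<notin> C - T" "arc f c d"
    using path_exit[OF b(1) _ b(2)] i0 by blast
  have "d \<in> D c" using cd(3) arc_iff[OF g] by blast
  then show ?thesis using cd by blast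
qed

lemma step_final:
  fixes f :: "real^'n \<Rightarrow> real^'n"
  assumes g: "good f D" and S: "\<forall>i\<in>S. D i \<subseteq> S" and C: "final_class f C" "C \<inter> S = {}"
    and r: "cone_r (restr0 f C) = mu" and Q: "Qsol f mu S"
  shows "Qsol f mu (S \<union> C)"
proof -
  obtain v w where vw: "pos_vec v" "pos_vec w" "\<forall>i. v$i \<le> w$i"
    "\<forall>i\<in>S. mu * v$i \<le> f v $ i \<and> f w $ i \<le> mu * w$i" using Q unfolding Qsol_def by blast
  obtain u where u: "pos_vec u" "\<forall>i\<in>C. f u $ i = mu * u$i" using final_eig[OF g C(1)] r by auto
  have cl: "\<forall>i\<in>C. D i \<subseteq> C" using closed_of_final[OF g C(1)] by blast
  define v' where "v' = (\<chi> i. if i \<in> C then u$i else v$i)"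
  define w' where "w' = (\<chi> i. if i \<in> C then u$i else w$i)"
  have v'p: "pos_vec v'" using u vw by (simp add: v'_def pos_vec_def)
  have w'p: "pos_vec w'" using u vw by (simp add: w'_def pos_vec_def)
  have onS: "f v' $ i = f v $ i \<and> f w' $ i = f w $ i" if i: "i \<in> S" for i
  proof
    show "f v' $ i = f v $ i"
      by (rule good_indep[OF g pos_nonneg[OF v'p] pos_nonneg[OF vw(1)]])
         (use S i C(2) in \<open>auto simp: v'_def\<close>)
    show "f w' $ i = f w $ i"
      by (rule good_indep[OF g pos_nonneg[OF w'p] pos_nonneg[OF vw(2)]])
         (use S i C(2) in \<open>auto simp: w'_def\<close>)
  qed
  have onC: "f v' $ i = f u $ i \<and> f w' $ i = f u $ i" if i: "i \<in> C" for i
  proof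
    show "f v' $ i = f u $ i"
      by (rule good_indep[OF g pos_nonneg[OF v'p] pos_nonneg[OF u(1)]])
         (use cl i in \<open>auto simp: v'_def\<close>)
    show "f w' $ i = f u $ i"
      by (rule good_indep[OF g pos_nonneg[OF w'p] pos_nonneg[OF u(1)]])
         (use cl i in \<open>auto simp: w'_def\<close>)
  qed
  show ?thesis unfolding Qsol_def
  proof (intro exI conjI ballI allI)
    show "pos_vec v'" "pos_vec w'" by (fact v'p, fact w'p)
    fix i
    show "v'$i \<le> w'$i" using vw(3) by (simp add: v'_def w'_def)
  next
    fix i assume i: "i \<in> S \<union> C"
    show "mu * v'$i \<le> f v' $ i"
    proof (cases "i \<in> C")
      case True then show ?thesis using onC u by (simp add: v'_def)
    next
      case False then show ?thesis using onS vw(4) i by (simp add: v'_def)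
    qed
    show "f w' $ i \<le> mu * w'$i"
    proof (cases "i \<in> C")
      case True then show ?thesis using onC u by (simp add: w'_def)
    next
      case False then show ?thesis using onS vw(4) i by (simp add: w'_def)
    qed
  qed
qed


lemma super_step:
  fixes f :: "real^'n \<Rightarrow> real^'n"
  assumes g: "good f D" and S: "\<forall>i\<in>S. D i \<subseteq> S" and CS: "\<forall>i\<in>C. D i \<subseteq> C \<union> S" "C \<inter> S = {}"
    and r: "cone_r (restr0 f C) < mu" and w: "pos_vec w" "\<forall>i\<in>S. f w $ i \<le> mu * w$i"
  shows "\<exists>w'. pos_vec w' \<and> (\<forall>i. i \<notin> C \<longrightarrow> w'$i = w$i) \<and> (\<forall>i\<in>C. 1 \<le> w'$i) \<and>
     (\<forall>i\<in>S \<union> C. f w' $ i \<le> mu * w'$i)"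
proof -
  obtain x where x: "pos_vec x" "ratio (restr0 f C) x < mu" using cone_r_less[OF r] by blast
  have xp: "x$i > 0" for i using x(1) by (simp add: pos_vec_def)
  have xC: "f (proj0 C x) $ i < mu * x$i" if "i \<in> C" for i
  proof -
    have "restr0 f C x $ i / x $ i < mu" using x(2) ratio_less_iff by blast
    then show ?thesis using that xp[of i] by (simp add: restr0_nth divide_less_eq)
  qed
  have xn: "nonneg_vec x" using pos_nonneg[OF x(1)] .
  have wn: "nonneg_vec w" using pos_nonneg[OF w(1)] .
  define Z where "Z s = proj0 C x + inverse s *\<^sub>R proj0 S w" for s :: real
  have Zn: "nonneg_vec (Z s)" if "s > 0" for s
    using xn wn that by (simp add: Z_def nonneg_vec_def proj0_def)
  have limZ: "(Z \<longlongrightarrow> proj0 C x) at_top"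
  proof -
    have "((\<lambda>s::real. inverse s) \<longlongrightarrow> 0) at_top" by (rule tendsto_inverse_0_at_top[OF filterlim_ident])
    then have "((\<lambda>s. proj0 C x + inverse s *\<^sub>R proj0 S w) \<longlongrightarrow> proj0 C x + (0::real) *\<^sub>R proj0 S w) at_top"
      by (intro tendsto_add tendsto_const tendsto_scaleR)
    then show ?thesis by (simp add: Z_def[abs_def])
  qed
  have limf: "((\<lambda>s. f (Z s)) \<longlongrightarrow> f (proj0 C x)) at_top"
  proof (rule continuous_on_tendsto_compose[OF good_cont[OF g] limZ])
    show "proj0 C x \<in> {x. nonneg_vec x}" using proj0_nonneg[OF xn] by simp
    show "\<forall>\<^sub>F s in at_top. Z s \<in> {x. nonneg_vec x}"
      using eventually_gt_at_top[of 0] by eventually_elim (use Zn in simp)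
  qed
  have "\<forall>\<^sub>F s in at_top. \<forall>i\<in>C. f (Z s) $ i < mu * x$i"
  proof (rule eventually_ball_finite)
    show "finite C" by simp
    show "\<forall>i\<in>C. \<forall>\<^sub>F s in at_top. f (Z s) $ i < mu * x$i"
      using order_tendstoD(2)[OF tendsto_vec_nth[OF limf] xC] by blast
  qed
  then obtain N where N: "\<forall>s\<ge>N. \<forall>i\<in>C. f (Z s) $ i < mu * x$i"
    unfolding eventually_at_top_linorder by blast
  define s where "s = max N (max 1 (1 / vmin x))"
  have s1: "s \<ge> 1" "s \<ge> N" "s \<ge> 1 / vmin x" unfolding s_def by auto
  have sp: "s > 0" using s1 by simp
  have vmp: "vmin x > 0" using vmin_pos[OF x(1)] .
  define w' where "w' = (\<chi> i. if i \<in> C then s * x$i else w$i)"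
  have w'p: "pos_vec w'" using xp w(1) sp by (simp add: w'_def pos_vec_def)
  show ?thesis
  proof (intro exI conjI allI impI ballI)
    show "pos_vec w'" by (rule w'p)
    fix i
    show "i \<notin> C \<Longrightarrow> w'$i = w$i" by (simp add: w'_def)
  next
    fix i assume i: "i \<in> C"
    have "1 / vmin x * x$i \<ge> 1" using vmin_le[of x i] vmp by (simp add: field_simps)
    moreover have "s * x$i \<ge> 1 / vmin x * x$i" using mult_right_mono[OF s1(3), of "x$i"] xp[of i] by simp
    ultimately show "1 \<le> w'$i" using i by (simp add: w'_def)
  next
    fix i assume i: "i \<in> S \<union> C"
    show "f w' $ i \<le> mu * w'$i"
    proof (cases "i \<in> C")
      case True
      have "f w' $ i = f (s *\<^sub>R Z s) $ i"
      proof (rule good_indep[OF g pos_nonneg[OF w'p]])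
        show "nonneg_vec (s *\<^sub>R Z s)" using nonneg_scale[OF Zn[OF sp], of s] sp by simp
        show "\<forall>j\<in>D i. w' $ j = (s *\<^sub>R Z s) $ j"
        proof
          fix j assume j: "j \<in> D i"
          then have "j \<in> C \<or> j \<in> S" using CS(1) True by blast
          then show "w' $ j = (s *\<^sub>R Z s) $ j" using CS(2) sp by (auto simp: w'_def Z_def proj0_def)
        qed
      qed
      also have "\<dots> = s * f (Z s) $ i" by (rule good_homog_i[OF g Zn[OF sp] sp])
      also have "\<dots> \<le> s * (mu * x$i)" using N s1(2) True sp by (simp add: less_imp_le)
      finally show ?thesis using True by (simp add: w'_def algebra_simps)
    next
      case False
      then have iS: "i \<in> S" using i by simp
      have "f w' $ i = f w $ i"
        by (rule good_indep[OF g pos_nonneg[OF w'p] wn]) (use S iS CS(2) in \<open>auto simp: w'_def\<close>)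
      then show ?thesis using w(2) iS False by (simp add: w'_def)
    qed
  qed
qed


lemma sub_step:
  fixes f :: "real^'n \<Rightarrow> real^'n"
  assumes g: "good f D" and S: "\<forall>i\<in>S. D i \<subseteq> S" and CS: "\<forall>i\<in>C. D i \<subseteq> C \<union> S" "C \<inter> S = {}"
    and C: "scc f C" "\<not> final_class f C" and mu: "mu > 0"
    and v: "pos_vec v" "\<forall>i\<in>S. mu * v$i \<le> f v $ i"
  shows "\<exists>v'. pos_vec v' \<and> (\<forall>i. i \<notin> C \<longrightarrow> v'$i = v$i) \<and> (\<forall>i\<in>C. v'$i \<le> 1) \<and>
     (\<forall>i\<in>S \<union> C. mu * v'$i \<le> f v' $ i)"
proof -
  obtain \<kappa> \<theta> where k: "\<kappa> > 0" "0 < \<theta>" "\<theta> \<le> 1" "\<forall>i. \<forall>j\<in>D i. \<forall>x m. nonneg_vec x \<and> m > 0 \<and>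
      (\<forall>k\<in>D i. m \<le> x$k) \<longrightarrow> \<kappa> * m * (x$j / m) powr \<theta> \<le> f x $ i"
    using good_growth_unif[OF g] by blast
  have expn: "\<exists>k\<in>C-T. \<exists>j\<in>D k. j \<in> T \<or> j \<in> S" if T: "T \<subseteq> C" "T \<noteq> C" for T
  proof -
    obtain k j where kj: "k \<in> C - T" "j \<in> D k" "j \<in> T \<or> j \<notin> C"
      using expansion_nonfinal[OF g C T] by blast
    then have "j \<in> T \<or> j \<in> S" using CS(1) by blast
    then show ?thesis using kj by blast
  qed
  define PP where "PP T \<longleftrightarrow> (\<exists>q::'n \<Rightarrow> real. \<forall>k\<in>T. 0 < q k \<and> q k \<le> \<theta>/2 \<and>
      (\<exists>j\<in>D k. j \<in> S \<or> (j \<in> T \<and> q k < \<theta> * q j)))" for T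
  have "PP C"
  proof (rule grow)
    show "finite C" by simp
    show "PP {}" unfolding PP_def by simp
  next
    fix T assume T: "T \<subseteq> C" "T \<noteq> C" "PP T"
    obtain q where q: "\<forall>k\<in>T. 0 < q k \<and> q k \<le> \<theta>/2 \<and> (\<exists>j\<in>D k. j \<in> S \<or> (j \<in> T \<and> q k < \<theta> * q j))"
      using T(3) unfolding PP_def by blast
    obtain k j where kj: "k \<in> C - T" "j \<in> D k" "j \<in> T \<or> j \<in> S" using expn[OF T(1,2)] by blast
    define nv where "nv = (if j \<in> S then \<theta>/2 else \<theta> * q j / 2)"
    define q' where "q' l = (if l = k then nv else q l)" for l
    have nvp: "0 < nv \<and> nv \<le> \<theta>/2"
    proof (cases "j \<in> S")
      case True then show ?thesis using k by (simp add: nv_def)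
    next
      case False
      then have "j \<in> T" using kj by blast
      then have "0 < q j" "q j \<le> \<theta>/2" using q by auto
      moreover have "\<theta> * q j \<le> \<theta>" using \<open>q j \<le> \<theta>/2\<close> k by (simp add: mult_le_cancel_left1) 
      ultimately show ?thesis using False k by (simp add: nv_def)
    qed
    have "PP (insert k T)" unfolding PP_def
    proof (rule exI[of _ q'], intro ballI)
      fix l assume l: "l \<in> insert k T"
      show "0 < q' l \<and> q' l \<le> \<theta>/2 \<and> (\<exists>j\<in>D l. j \<in> S \<or> (j \<in> insert k T \<and> q' l < \<theta> * q' j))"
      proof (cases "l = k")
        case True
        have "j \<in> S \<or> (j \<in> insert k T \<and> q' k < \<theta> * q' j)"
        proof (cases "j \<in> S")
          case False
          then have jT: "j \<in> T" using kj by blast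
          then have jk: "j \<noteq> k" using kj by blast
          have "0 < q j" using q jT by blast
          then have "\<theta> * q j / 2 < \<theta> * q j" using k by simp
          then show ?thesis using jT jk False by (simp add: q'_def nv_def)
        qed simp
        then show ?thesis using True nvp kj by (auto simp: q'_def)
      next
        case False
        then have lT: "l \<in> T" using l by simp
        obtain j' where j': "j' \<in> D l" "j' \<in> S \<or> (j' \<in> T \<and> q l < \<theta> * q j')" using q lT by blast
        have jj: "j' \<in> S \<or> (j' \<in> insert k T \<and> q' l < \<theta> * q' j')"
        proof (cases "j' \<in> S")
          case False
          then have "j' \<in> T" "q l < \<theta> * q j'" using j' by auto
          moreover have "j' \<noteq> k" using \<open>j' \<in> T\<close> kj by blast
          ultimately show ?thesis using \<open>l \<noteq> k\<close> by (simp add: q'_def)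
        qed simp
        have "0 < q' l \<and> q' l \<le> \<theta>/2" using q lT False by (simp add: q'_def)
        then show ?thesis using jj j'(1) by blast
      qed
    qed
    then show "\<exists>k\<in>C - T. PP (insert k T)" using kj by blast
  qed
  then obtain q where q: "\<forall>k\<in>C. 0 < q k \<and> q k \<le> \<theta>/2 \<and> (\<exists>j\<in>D k. j \<in> S \<or> (j \<in> C \<and> q k < \<theta> * q j))"
    unfolding PP_def by blast
  have vp: "v$i > 0" for i using v(1) by (simp add: pos_vec_def)
  define d0 where "d0 = min 1 (vmin v)"
  have d0p: "d0 > 0" using vmin_pos[OF v(1)] by (simp add: d0_def)
  define V where "V \<delta> = (\<chi> i. if i \<in> C then \<delta> powr (1 - q i) else v$i)" for \<delta> :: real
  have Vpos: "pos_vec (V \<delta>)" if "\<delta> > 0" for \<delta> using that vp by (simp add: V_def pos_vec_def)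
  have LB: "\<forall>l\<in>D k. \<delta> \<le> V \<delta> $ l" if kC: "k \<in> C" and d: "0 < \<delta>" "\<delta> \<le> d0" for k \<delta>
  proof
    fix l assume l: "l \<in> D k"
    show "\<delta> \<le> V \<delta> $ l"
    proof (cases "l \<in> C")
      case True
      have d1: "\<delta> \<le> 1" using d unfolding d0_def by simp
      have "q l > 0" using q True by blast
      then have "\<delta> powr 1 \<le> \<delta> powr (1 - q l)"
        using powr_mono'[of "1 - q l" 1 \<delta>] d(1) d1 by simp
      then show ?thesis using True d by (simp add: V_def)
    next
      case False
      then have "l \<in> S" using CS(1) kC l by blast
      have "\<delta> \<le> vmin v" using d unfolding d0_def by simp
      also have "vmin v \<le> v$l" by (rule vmin_le)
      finally show ?thesis using False by (simp add: V_def)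
    qed
  qed
  have perk: "\<exists>d>0. \<forall>\<delta>. 0 < \<delta> \<and> \<delta> \<le> d \<longrightarrow> mu * V \<delta> $ k \<le> f (V \<delta>) $ k" if kC: "k \<in> C" for k
  proof -
    obtain j where j: "j \<in> D k" "j \<in> S \<or> (j \<in> C \<and> q k < \<theta> * q j)" using q kC by blast
    have qk: "0 < q k" "q k \<le> \<theta>/2" using q kC by auto
    have G: "\<kappa> * \<delta> * (V \<delta> $ j / \<delta>) powr \<theta> \<le> f (V \<delta>) $ k" if d: "0 < \<delta>" "\<delta> \<le> d0" for \<delta>
      using k(4) j(1) pos_nonneg[OF Vpos[OF d(1)]] d(1) LB[OF kC d] by blast
    show ?thesis
    proof (cases "j \<in> S")
      case True
      then have jC: "j \<notin> C" using CS(2) by blast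
      define c where "c = \<kappa> * v$j powr \<theta>"
      define e where "e = \<theta> - q k"
      have cp: "c > 0" using k(1) vp[of j] by (simp add: c_def)
      have ep: "e > 0" using qk k by (simp add: e_def)
      show ?thesis
      proof (rule exI[of _ "min d0 ((c / mu) powr (1/e))"], intro conjI allI impI)
        show "min d0 ((c / mu) powr (1/e)) > 0" using d0p cp mu by simp
        fix \<delta> assume d: "0 < \<delta> \<and> \<delta> \<le> min d0 ((c / mu) powr (1/e))"
        have "mu * \<delta> powr ((1 - \<theta>) + e) \<le> c * \<delta> powr (1 - \<theta>)"
          by (rule alg_small) (use d ep mu cp in auto)
        also have "c * \<delta> powr (1 - \<theta>) = \<kappa> * \<delta> * (V \<delta> $ j / \<delta>) powr \<theta>"
        proof -
          have "V \<delta> $ j = v$j" using jC by (simp add: V_def)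
          then show ?thesis using alg_I1[of \<delta> "v$j" \<kappa> \<theta>] d vp[of j] unfolding c_def by (simp only:)
        qed
        also have "\<dots> \<le> f (V \<delta>) $ k" using G d by simp
        finally show "mu * V \<delta> $ k \<le> f (V \<delta>) $ k" using kC by (simp add: V_def e_def)
      qed
    next
      case False
      then have jC: "j \<in> C" "q k < \<theta> * q j" using j by auto
      define e where "e = \<theta> * q j - q k"
      have ep: "e > 0" using jC by (simp add: e_def)
      show ?thesis
      proof (rule exI[of _ "min d0 ((\<kappa> / mu) powr (1/e))"], intro conjI allI impI)
        show "min d0 ((\<kappa> / mu) powr (1/e)) > 0" using d0p k(1) mu by simp
        fix \<delta> assume d: "0 < \<delta> \<and> \<delta> \<le> min d0 ((\<kappa> / mu) powr (1/e))"
        have "mu * \<delta> powr ((1 - \<theta> * q j) + e) \<le> \<kappa> * \<delta> powr (1 - \<theta> * q j)"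
          by (rule alg_small) (use d ep mu k in auto)
        also have "\<kappa> * \<delta> powr (1 - \<theta> * q j) = \<kappa> * \<delta> * (V \<delta> $ j / \<delta>) powr \<theta>"
        proof -
          have "V \<delta> $ j = \<delta> powr (1 - q j)" using jC by (simp add: V_def)
          then show ?thesis using alg_I2[of \<delta> \<kappa> "q j" \<theta>] d by (simp only:)
        qed
        also have "\<dots> \<le> f (V \<delta>) $ k" using G d by simp
        finally show "mu * V \<delta> $ k \<le> f (V \<delta>) $ k" using kC by (simp add: V_def e_def)
      qed
    qed
  qed
  obtain d where d: "d > 0" "\<forall>\<delta>. 0 < \<delta> \<and> \<delta> \<le> d \<longrightarrow> (\<forall>k\<in>C. mu * V \<delta> $ k \<le> f (V \<delta>) $ k)"
  proof -
    have "\<forall>k\<in>C. \<exists>d>0. \<forall>\<delta>. 0 < \<delta> \<and> \<delta> \<le> d \<longrightarrow> mu * V \<delta> $ k \<le> f (V \<delta>) $ k"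
      using perk by blast
    then show ?thesis using unif_delta[of C "\<lambda>k \<delta>. mu * V \<delta> $ k \<le> f (V \<delta>) $ k"] that by auto
  qed
  define \<delta> where "\<delta> = min d d0"
  have dp: "\<delta> > 0" "\<delta> \<le> d" "\<delta> \<le> d0" using d(1) d0p by (auto simp: \<delta>_def)
  have d1: "\<delta> \<le> 1" using dp(3) by (simp add: d0_def)
  show ?thesis
  proof (intro exI conjI allI impI ballI)
    show "pos_vec (V \<delta>)" by (rule Vpos[OF dp(1)])
    fix i
    show "i \<notin> C \<Longrightarrow> V \<delta> $ i = v$i" by (simp add: V_def)
  next
    fix i assume i: "i \<in> C"
    have "\<delta> powr (1 - q i) \<le> 1" by (rule powr_le1) (use q i k dp d1 in auto)
    then show "V \<delta> $ i \<le> 1" using i by (simp add: V_def)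
  next
    fix i assume i: "i \<in> S \<union> C"
    show "mu * V \<delta> $ i \<le> f (V \<delta>) $ i"
    proof (cases "i \<in> C")
      case True then show ?thesis using d(2) dp by blast
    next
      case False
      then have iS: "i \<in> S" using i by simp
      have "f (V \<delta>) $ i = f v $ i"
        by (rule good_indep[OF g pos_nonneg[OF Vpos[OF dp(1)]] pos_nonneg[OF v(1)]])
           (use S iS CS(2) in \<open>auto simp: V_def\<close>)
      then show ?thesis using v(2) iS False by (simp add: V_def)
    qed
  qed
qed

lemma step_nonfinal:
  fixes f :: "real^'n \<Rightarrow> real^'n"
  assumes g: "good f D" and S: "\<forall>i\<in>S. D i \<subseteq> S" and CS: "\<forall>i\<in>C. D i \<subseteq> C \<union> S" "C \<inter> S = {}"
    and C: "scc f C" "\<not> final_class f C" and r: "cone_r (restr0 f C) < mu" and mu: "mu > 0"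
    and Q: "Qsol f mu S"
  shows "Qsol f mu (S \<union> C)"
proof -
  obtain v w where vw: "pos_vec v" "pos_vec w" "\<forall>i. v$i \<le> w$i"
    "\<forall>i\<in>S. mu * v$i \<le> f v $ i \<and> f w $ i \<le> mu * w$i" using Q unfolding Qsol_def by blast
  obtain v' where v': "pos_vec v'" "\<forall>i. i \<notin> C \<longrightarrow> v'$i = v$i" "\<forall>i\<in>C. v'$i \<le> 1"
      "\<forall>i\<in>S \<union> C. mu * v'$i \<le> f v' $ i"
    using sub_step[OF g S CS C mu vw(1)] vw(4) by blast
  obtain w' where w': "pos_vec w'" "\<forall>i. i \<notin> C \<longrightarrow> w'$i = w$i" "\<forall>i\<in>C. 1 \<le> w'$i"
      "\<forall>i\<in>S \<union> C. f w' $ i \<le> mu * w'$i"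
    using super_step[OF g S CS r vw(2)] vw(4) by blast
  have le: "\<forall>i. v'$i \<le> w'$i"
  proof
    fix i show "v'$i \<le> w'$i"
    proof (cases "i \<in> C")
      case True then show ?thesis using v'(3) w'(3) by (meson order_trans)
    next
      case False then show ?thesis using v'(2) w'(2) vw(3) by simp
    qed
  qed
  show ?thesis unfolding Qsol_def using v' w' le by blast
qed

theorem partB:
  fixes f :: "real^'n \<Rightarrow> real^'n"
  assumes g: "good f D" and sn: "strongly_nonneg f"
  shows "\<exists>x. pos_eigvec f x"
proof -
  define mu where "mu = cone_r f"
  have snF: "\<And>C. final_class f C \<Longrightarrow> cone_r (restr0 f C) = mu"
    and snN: "\<And>C. scc f C \<Longrightarrow> \<not> final_class f C \<Longrightarrow> cone_r (restr0 f C) < mu"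
    using sn unfolding strongly_nonneg_def mu_def by blast+
  obtain C0 where C0: "final_class f C0"
    using closed_contains_final[of f UNIV] unfolding closedG_def by blast
  obtain u where u: "pos_vec u" "\<forall>i\<in>C0. f u $ i = cone_r (restr0 f C0) * u$i"
    using final_eig[OF g C0] by blast
  have mup: "mu > 0"
  proof -
    obtain i where i: "i \<in> C0" using C0 scc_nonempty unfolding final_class_def by blast
    have "f u $ i > 0" using good_pos[OF g u(1)] by (simp add: pos_vec_def)
    moreover have "u $ i > 0" using u(1) by (simp add: pos_vec_def)
    ultimately show ?thesis using u(2) i snF[OF C0] by (simp add: zero_less_mult_iff)
  qed
  have clD: "\<forall>i\<in>S. D i \<subseteq> S" if "closedG f S" for S
    using that arc_iff[OF g] unfolding closedG_def by blast
  have main: "\<exists>S. closedG f S \<and> Qsol f mu S \<and> (k \<le> card S \<or> S = UNIV)" for k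
  proof (induction k)
    case 0
    have "Qsol f mu {}" unfolding Qsol_def using vone_pos by blast
    moreover have "closedG f {}" unfolding closedG_def by blast
    ultimately show ?case by blast
  next
    case (Suc k)
    then obtain S where S: "closedG f S" "Qsol f mu S" "k \<le> card S \<or> S = UNIV" by blast
    show ?case
    proof (cases "S = UNIV")
      case True then show ?thesis using S by blast
    next
      case False
      obtain C where C: "scc f C" "C \<inter> S = {}" "\<forall>c d. c \<in> C \<and> arc f c d \<longrightarrow> d \<in> C \<or> d \<in> S"
        using next_class[OF S(1) False] by blast
      have CS: "\<forall>i\<in>C. D i \<subseteq> C \<union> S" using C(3) arc_iff[OF g] by blast
      have Q': "Qsol f mu (S \<union> C)"
      proof (cases "final_class f C")
        case True
        show ?thesis by (rule step_final[OF g clD[OF S(1)] True C(2) snF[OF True] S(2)])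
      next
        case False
        show ?thesis by (rule step_nonfinal[OF g clD[OF S(1)] CS C(2) C(1) False snN[OF C(1) False] mup S(2)])
      qed
      have cl': "closedG f (S \<union> C)" using S(1) C(3) unfolding closedG_def by blast
      have "card (S \<union> C) = card S + card C" using C(2) by (simp add: card_Un_disjoint inf_commute)
      moreover have "card C \<ge> 1" using scc_nonempty[OF C(1)] by (simp add: Suc_leI card_gt_0_iff)
      ultimately have "Suc k \<le> card (S \<union> C)" using S(3) False by linarith
      then show ?thesis using Q' cl' by blast
    qed
  qed
  obtain S where S: "closedG f S" "Qsol f mu S" "CARD('n) \<le> card S \<or> S = UNIV" using main by blast
  have "S = UNIV"
  proof (cases "S = UNIV")
    case False
    then have "CARD('n) \<le> card S" using S(3) by blast
    moreover have "card S \<le> CARD('n)" by (rule card_mono) auto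
    ultimately show ?thesis using card_eq_UNIV_imp_eq_UNIV[of S] by simp
  qed
  then obtain v w where vw: "pos_vec v" "pos_vec w" "\<forall>i. v$i \<le> w$i"
    "\<forall>i. mu * v$i \<le> f v $ i" "\<forall>i. f w $ i \<le> mu * w$i" using S(2) unfolding Qsol_def by blast
  obtain y where "pos_vec y" "f y = mu *\<^sub>R y" using tarski_eig[OF g mup vw(1,3,4,5)] by blast
  then show ?thesis unfolding pos_eigvec_def by blast
qed

theorem theorem7p1:
  fixes f :: "real^'n \<Rightarrow> real^'n"
  assumes "f \<in> Mplus_cl"
  shows "((\<exists>x. pos_eigvec f x) \<longleftrightarrow> strongly_nonneg f) \<and>
         ((\<exists>x. pos_eigvec f x) \<longrightarrow>
            ((\<forall>x y. pos_eigvec f x \<and> pos_eigvec f y \<longrightarrow> (\<exists>c. y = c *\<^sub>R x))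
             \<longleftrightarrow> (\<exists>!C. final_class f C)))"
proof -
  obtain D where g: "good f D" using good_Mplus_cl[OF assms] by blast
  have 1: "(\<exists>x. pos_eigvec f x) \<longleftrightarrow> strongly_nonneg f" using partA[OF g] partB[OF g] by blast
  have 2: "(\<exists>x. pos_eigvec f x) \<longrightarrow>
            ((\<forall>x y. pos_eigvec f x \<and> pos_eigvec f y \<longrightarrow> (\<exists>c. y = c *\<^sub>R x))
             \<longleftrightarrow> (\<exists>!C. final_class f C))"
  proof (intro impI iffI)
    fix x0 assume "\<exists>x. pos_eigvec f x"
    then obtain x where x: "pos_eigvec f x" by blast
    {
      assume "\<forall>x y. pos_eigvec f x \<and> pos_eigvec f y \<longrightarrow> (\<exists>c. y = c *\<^sub>R x)"
      then show "\<exists>!C. final_class f C" using uniq_only_if[OF g x] by blast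
    }
    {
      assume "\<exists>!C. final_class f C"
      then show "\<forall>x y. pos_eigvec f x \<and> pos_eigvec f y \<longrightarrow> (\<exists>c. y = c *\<^sub>R x)"
        using uniq_if[OF g] by blast
    }
  qed
  show ?thesis using 1 2 by blast
qed

end
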